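(* For any cyclic CFSM protocol $\mathbf P$ with communication graph $(N,E)$ the following four conditions are equivalent: (a) $\mathbf P$ has the recognizable channel property; (b) $\mathbf P$ has the rational channel property; (c) for every $\beta\in E$ and every composite state $S$, the set $Q_\beta(S)=\{x_\beta\in M_\beta^*: (x_\xi:\xi\in E)\in\mathbf L(S)\text{ and } x_\xi=\lambda \text{ for } \xi\neq\beta\}$ is regular; (d) there exists $\beta\in E$ such that $Q_\beta(S)$ is regular for every composite state $S$.
   Context: A CFSM protocol $\mathbf P$ has a finite directed communication graph $G=(N,E)$ (edge $\xi$ has tail $-\xi$, head $+\xi$), pairwise disjoint finite message sets $M_\xi$ ($\xi\in E$), and for each $j\in N$ a finite state machine $F_j=(K_j,\Sigma_j,T_j,h_j)$: finite state set $K_j$, initial state $h_j$, alphabet $\Sigma_j=\{+b: b\in M_\xi,\ j=+\xi\}\cup\{-b: b\in M_\xi,\ j=-\xi\}$, transitions $T_j\subseteq K_j\times\Sigma_j\times K_j$ ($+b$ = receive, $-b$ = send). A composite state is $S=(p_j:j\in N)$, $p_j\in K_j$; a channel content is $C=(x_\xi:\xi\in E)$, $x_\xi\in M_\xi^*$; global states are pairs $(S,C)$; $C^0$ has all components equal to the empty word $\lambda$; the initial global state is $(S^0,C^0)$, $S^0=(h_j:j\in N)$. A step: some machine $F_i$ takes $p_i\xrightarrow{-b}q_i$ with $b\in M_\beta$, $i=-\beta$, appending $b$ to the end of $x_\beta$; or takes $p_i\xrightarrow{+b}q_i$ with $b\in M_\beta$, $i=+\beta$, provided $x_\beta$ begins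 with $b$, removing it; everything else unchanged. $\vdash^*$ denotes reachability by finitely many steps. $\mathbf L(S)=\{C: (S^0,C^0)\vdash^*(S,C)\}\subseteq\prod_{\xi\in E}M_\xi^*$. A subset of the monoid $\prod_{\xi\in E}M_\xi^*$ (componentwise concatenation) is rational if it belongs to the smallest family containing the finite sets and closed under union, product and Kleene star; it is recognizable if it is a finite union of sets $\prod_{\xi\in E}L_\xi$ with each $L_\xi\subseteq M_\xi^*$ a regular language. $\mathbf P$ has the rational (resp. recognizable) channel property if $\mathbf L(S)$ is rational (resp. recognizable) for every composite state $S$. $\mathbf P$ is cyclic if $G$ is a directed cycle. *)

theory Defs
  imports Main
begin

definition lconc :: "'a list set \<Rightarrow> 'a list set \<Rightarrow> 'a list set" where
  "lconc A B = {x @ y | x y. x \<in> A \<and> y \<in> B}"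

inductive_set lstar :: "'a list set \<Rightarrow> 'a list set" for A where
  lstar_nil: "[] \<in> lstar A"
| lstar_app: "x \<in> A \<Longrightarrow> y \<in> lstar A \<Longrightarrow> x @ y \<in> lstar A"

inductive regular :: "'a list set \<Rightarrow> bool" where
  reg_finite: "finite A \<Longrightarrow> regular A"
| reg_union: "regular A \<Longrightarrow> regular B \<Longrightarrow> regular (A \<union> B)"
| reg_conc: "regular A \<Longrightarrow> regular B \<Longrightarrow> regular (lconc A B)"
| reg_star: "regular A \<Longrightarrow> regular (lstar A)"

text \<open>Edges form a finite type 'e, so E = UNIV. A channel content is a function
  'e \<Rightarrow> 'm list whose component at \<xi> lies in M \<xi>*.\<close>

definition chan_monoid :: "('e \<Rightarrow> 'm set) \<Rightarrow> ('e \<Rightarrow> 'm list) set" where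
  "chan_monoid M = {C. \<forall>\<xi>. C \<xi> \<in> lists (M \<xi>)}"

definition cprod :: "('e \<Rightarrow> 'm list) set \<Rightarrow> ('e \<Rightarrow> 'm list) set \<Rightarrow> ('e \<Rightarrow> 'm list) set" where
  "cprod A B = {(\<lambda>\<xi>. x \<xi> @ y \<xi>) | x y. x \<in> A \<and> y \<in> B}"

inductive_set cstar :: "('e \<Rightarrow> 'm list) set \<Rightarrow> ('e \<Rightarrow> 'm list) set" for A where
  cstar_unit: "(\<lambda>\<xi>. []) \<in> cstar A"
| cstar_app: "x \<in> A \<Longrightarrow> y \<in> cstar A \<Longrightarrow> (\<lambda>\<xi>. x \<xi> @ y \<xi>) \<in> cstar A"

inductive rational :: "('e \<Rightarrow> 'm set) \<Rightarrow> ('e \<Rightarrow> 'm list) set \<Rightarrow> bool" for M where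
  rat_finite: "finite A \<Longrightarrow> A \<subseteq> chan_monoid M \<Longrightarrow> rational M A"
| rat_union: "rational M A \<Longrightarrow> rational M B \<Longrightarrow> rational M (A \<union> B)"
| rat_prod: "rational M A \<Longrightarrow> rational M B \<Longrightarrow> rational M (cprod A B)"
| rat_star: "rational M A \<Longrightarrow> rational M (cstar A)"

definition recognizable :: "('e \<Rightarrow> 'm set) \<Rightarrow> ('e \<Rightarrow> 'm list) set \<Rightarrow> bool" where
  "recognizable M A \<longleftrightarrow>
     (\<exists>F :: ('e \<Rightarrow> 'm list set) set. finite F \<and>
        (\<forall>L\<in>F. \<forall>\<xi>. L \<xi> \<subseteq> lists (M \<xi>) \<and> regular (L \<xi>)) \<and>
        A = (\<Union>L\<in>F. {C. \<forall>\<xi>. C \<xi> \<in> L \<xi>}))"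

datatype 'm act = Snd 'm | Rcv 'm

text \<open>Communication graph: nodes = finite type 'n, edges = finite type 'e,
  tail \<xi> = -\<xi>, head \<xi> = +\<xi>.  Snd b means -b (send), Rcv b means +b (receive).\<close>

definition cfsm_protocol ::
  "('e::finite \<Rightarrow> 'n::finite) \<Rightarrow> ('e \<Rightarrow> 'n) \<Rightarrow> ('e \<Rightarrow> 'm set) \<Rightarrow> ('n \<Rightarrow> 's set)
    \<Rightarrow> ('n \<Rightarrow> ('s \<times> 'm act \<times> 's) set) \<Rightarrow> ('n \<Rightarrow> 's) \<Rightarrow> bool" where
  "cfsm_protocol tail head M K T h \<longleftrightarrow>
     (\<forall>\<xi>. finite (M \<xi>)) \<and>
     (\<forall>\<xi> \<eta>. \<xi> \<noteq> \<eta> \<longrightarrow> M \<xi> \<inter> M \<eta> = {}) \<and>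
     (\<forall>j. finite (K j) \<and> h j \<in> K j) \<and>
     (\<forall>j p a q. (p, a, q) \<in> T j \<longrightarrow> p \<in> K j \<and> q \<in> K j \<and>
        (case a of Snd b \<Rightarrow> \<exists>\<xi>. b \<in> M \<xi> \<and> tail \<xi> = j
                 | Rcv b \<Rightarrow> \<exists>\<xi>. b \<in> M \<xi> \<and> head \<xi> = j))"

text \<open>The communication graph is a directed cycle: every node has exactly one outgoing
  and exactly one incoming edge, and the graph is strongly connected.\<close>
definition cyclic_graph :: "('e::finite \<Rightarrow> 'n::finite) \<Rightarrow> ('e \<Rightarrow> 'n) \<Rightarrow> bool" where
  "cyclic_graph tail head \<longleftrightarrow> bij tail \<and> bij head \<and>
     (\<forall>i j. (i, j) \<in> {(tail \<xi>, head \<xi>) | \<xi>. True}\<^sup>*)"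

inductive cfsm_step ::
  "('e \<Rightarrow> 'n) \<Rightarrow> ('e \<Rightarrow> 'n) \<Rightarrow> ('e \<Rightarrow> 'm set) \<Rightarrow> ('n \<Rightarrow> ('s \<times> 'm act \<times> 's) set)
    \<Rightarrow> ('n \<Rightarrow> 's) \<times> ('e \<Rightarrow> 'm list) \<Rightarrow> ('n \<Rightarrow> 's) \<times> ('e \<Rightarrow> 'm list) \<Rightarrow> bool"
  for tail head M T where
  send: "(S i, Snd b, q) \<in> T i \<Longrightarrow> b \<in> M \<beta> \<Longrightarrow> tail \<beta> = i \<Longrightarrow>
         cfsm_step tail head M T (S, C) (S(i := q), C(\<beta> := C \<beta> @ [b]))"
| recv: "(S i, Rcv b, q) \<in> T i \<Longrightarrow> b \<in> M \<beta> \<Longrightarrow> head \<beta> = i \<Longrightarrow> C \<beta> = b # w \<Longrightarrow>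
         cfsm_step tail head M T (S, C) (S(i := q), C(\<beta> := w))"

definition reach_L ::
  "('e \<Rightarrow> 'n) \<Rightarrow> ('e \<Rightarrow> 'n) \<Rightarrow> ('e \<Rightarrow> 'm set) \<Rightarrow> ('n \<Rightarrow> ('s \<times> 'm act \<times> 's) set)
    \<Rightarrow> ('n \<Rightarrow> 's) \<Rightarrow> ('n \<Rightarrow> 's) \<Rightarrow> ('e \<Rightarrow> 'm list) set" where
  "reach_L tail head M T h S = {C. (cfsm_step tail head M T)\<^sup>*\<^sup>* (h, \<lambda>\<xi>. []) (S, C)}"

definition Q_set ::
  "('e \<Rightarrow> 'n) \<Rightarrow> ('e \<Rightarrow> 'n) \<Rightarrow> ('e \<Rightarrow> 'm set) \<Rightarrow> ('n \<Rightarrow> ('s \<times> 'm act \<times> 's) set)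
    \<Rightarrow> ('n \<Rightarrow> 's) \<Rightarrow> 'e \<Rightarrow> ('n \<Rightarrow> 's) \<Rightarrow> 'm list set" where
  "Q_set tail head M T h \<beta> S =
     {C \<beta> | C. C \<in> reach_L tail head M T h S \<and> (\<forall>\<xi>. \<xi> \<noteq> \<beta> \<longrightarrow> C \<xi> = [])}"

definition composite_state :: "('n \<Rightarrow> 's set) \<Rightarrow> ('n \<Rightarrow> 's) \<Rightarrow> bool" where
  "composite_state K S \<longleftrightarrow> (\<forall>j. S j \<in> K j)"

definition rational_channel_property where
  "rational_channel_property tail head M K T h \<longleftrightarrow>
     (\<forall>S. composite_state K S \<longrightarrow> rational M (reach_L tail head M T h S))"

definition recognizable_channel_property where
  "recognizable_channel_property tail head M K T h \<longleftrightarrow>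
     (\<forall>S. composite_state K S \<longrightarrow> recognizable M (reach_L tail head M T h S))"

end

theory Submission
  imports Defs "HOL-Library.Sublist" "HOL-Library.FuncSet"
begin

definition lq :: "'a list \<Rightarrow> 'a list set \<Rightarrow> 'a list set" where
  "lq u A = {v. u @ v \<in> A}"

definition fin_quot :: "'a list set \<Rightarrow> bool" where
  "fin_quot A \<longleftrightarrow> finite (range (\<lambda>u. lq u A))"

definition fin_reg :: "'a list set \<Rightarrow> bool" where
  "fin_reg A \<longleftrightarrow> fin_quot A \<and> (\<exists>S. finite S \<and> A \<subseteq> lists S)"

lemma lq_Nil[simp]: "lq [] A = A" by (simp add: lq_def)
lemma lq_append: "lq (u @ v) A = lq v (lq u A)" by (simp add: lq_def)

lemma fin_quot_lq: "fin_quot A \<Longrightarrow> fin_quot (lq u A)"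
proof -
  assume "fin_quot A"
  have "range (\<lambda>v. lq v (lq u A)) \<subseteq> range (\<lambda>u. lq u A)"
    by (auto simp: lq_append[symmetric])
  thus ?thesis using \<open>fin_quot A\<close> unfolding fin_quot_def by (rule finite_subset)
qed

lemma lconcI: "x \<in> A \<Longrightarrow> y \<in> B \<Longrightarrow> x @ y \<in> lconc A B"
  unfolding lconc_def by blast

lemma lconcE: "z \<in> lconc A B \<Longrightarrow> (\<And>x y. z = x @ y \<Longrightarrow> x \<in> A \<Longrightarrow> y \<in> B \<Longrightarrow> P) \<Longrightarrow> P"
  unfolding lconc_def by blast

lemma lstar_append: "x \<in> lstar A \<Longrightarrow> y \<in> lstar A \<Longrightarrow> x @ y \<in> lstar A"
proof (induction x rule: lstar.induct)
  case lstar_nil then show ?case by simp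
next
  case (lstar_app x ya) then show ?case by (metis append_assoc lstar.lstar_app)
qed

lemma lstar_single: "x \<in> A \<Longrightarrow> x \<in> lstar A"
  by (metis append_Nil2 lstar.intros)

lemma regular_Union: "finite F \<Longrightarrow> (\<forall>B\<in>F. regular B) \<Longrightarrow> regular (\<Union>F)"
  by (induction F rule: finite_induct) (auto intro: regular.intros)

section \<open>Kleene: finitely many quotients implies regular\<close>

definition W :: "'a set \<Rightarrow> 'a list set set \<Rightarrow> 'a list set \<Rightarrow> 'a list set \<Rightarrow> 'a list set" where
  "W S P X Y = {w \<in> lists S. lq w X = Y \<and> (\<forall>i. 0 < i \<and> i < length w \<longrightarrow> lq (take i w) X \<in> P)}"

lemma W_empty: "finite S \<Longrightarrow> finite (W S {} X Y)"
proof -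
  assume fS: "finite S"
  have "W S {} X Y \<subseteq> insert [] ((\<lambda>a. [a]) ` S)"
  proof
    fix w assume w: "w \<in> W S {} X Y"
    have "length w < 2"
    proof (rule ccontr)
      assume "\<not> length w < 2"
      then have "0 < (1::nat) \<and> 1 < length w" by simp
      with w show False unfolding W_def by blast
    qed
    with w show "w \<in> insert [] ((\<lambda>a. [a]) ` S)"
      unfolding W_def by (cases w) auto
  qed
  moreover have "finite (insert [] ((\<lambda>a. [a]) ` S))" using fS by simp
  ultimately show ?thesis by (rule finite_subset)
qed

lemma W_mono: "P \<subseteq> P' \<Longrightarrow> W S P X Y \<subseteq> W S P' X Y"
  unfolding W_def by blast

lemma W_concat:
  assumes u: "u \<in> W S P X Z" and v: "v \<in> W S P Z Y" and Z: "Z \<in> P"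
  shows "u @ v \<in> W S P X Y"
proof -
  have "lq (u @ v) X = Y" using u v by (simp add: W_def lq_append)
  moreover have "lq (take i (u @ v)) X \<in> P" if "0 < i" "i < length (u @ v)" for i
  proof (cases "i < length u")
    case True
    then show ?thesis using u that by (auto simp: W_def)
  next
    case False
    then have eq: "take i (u @ v) = u @ take (i - length u) v" by simp
    show ?thesis
    proof (cases "i = length u")
      case True
      then show ?thesis using u Z by (simp add: W_def)
    next
      case False
      then have "0 < i - length u" "i - length u < length v" using \<open>\<not> i < length u\<close> that by auto
      then have "lq (take (i - length u) v) Z \<in> P" using v by (auto simp: W_def)
      moreover have "lq (take i (u @ v)) X = lq (take (i - length u) v) Z"
        using u \<open>\<not> i < length u\<close> by (simp add: lq_append W_def)
      ultimately show ?thesis by simp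
    qed
  qed
  moreover have "u @ v \<in> lists S" using u v by (simp add: W_def)
  ultimately show ?thesis unfolding W_def by blast
qed

lemma W_star: "lstar (W S P Z Z) \<subseteq> W S (insert Z P) Z Z"
proof
  fix x assume "x \<in> lstar (W S P Z Z)"
  then show "x \<in> W S (insert Z P) Z Z"
  proof (induction x rule: lstar.induct)
    case lstar_nil
    then show ?case by (simp add: W_def)
  next
    case (lstar_app x y)
    then show ?case using W_mono[of P "insert Z P"] by (intro W_concat) auto
  qed
qed

lemma W_split:
  assumes w: "w \<in> W S (insert Z P) X Y"
  shows "w \<in> W S P X Y \<or> (\<exists>u v. w = u @ v \<and> u \<in> W S P X Z \<and> v \<in> W S (insert Z P) Z Y \<and> length v < length w)"
proof (cases "\<exists>i. 0 < i \<and> i < length w \<and> lq (take i w) X = Z")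
  case False
  then have "w \<in> W S P X Y" using w unfolding W_def by auto
  then show ?thesis by blast
next
  case True
  define i where "i = (LEAST i. 0 < i \<and> i < length w \<and> lq (take i w) X = Z)"
  have i: "0 < i \<and> i < length w \<and> lq (take i w) X = Z"
    unfolding i_def using True by (rule LeastI_ex)
  have min: "\<And>j. j < i \<Longrightarrow> \<not> (0 < j \<and> j < length w \<and> lq (take j w) X = Z)"
    unfolding i_def using not_less_Least by blast
  have wl: "w \<in> lists S" using w by (simp add: W_def)
  have u: "take i w \<in> W S P X Z"
  proof -
    have "lq (take j (take i w)) X \<in> P" if "0 < j" "j < length (take i w)" for j
    proof -
      have "j < i" "j < length w" using that i by auto
      then have "lq (take j w) X \<in> insert Z P" using w that unfolding W_def by auto
      moreover have "lq (take j w) X \<noteq> Z" using min[OF \<open>j < i\<close>] that \<open>j < length w\<close> by auto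
      ultimately show ?thesis using \<open>j < i\<close> by (simp add: min_def)
    qed
    moreover have "take i w \<in> lists S" using wl by (auto dest: in_set_takeD)
    ultimately show ?thesis using i unfolding W_def by blast
  qed
  have v: "drop i w \<in> W S (insert Z P) Z Y"
  proof -
    have wY: "lq w X = Y" using w unfolding W_def by blast
    have "lq (drop i w) Z = Y" using wY i lq_append[of "take i w" "drop i w" X] by simp
    moreover have "lq (take j (drop i w)) Z \<in> insert Z P" if "0 < j" "j < length (drop i w)" for j
    proof -
      have "take (i + j) w = take i w @ take j (drop i w)" by (simp add: take_add)
      moreover have "lq (take (i + j) w) X \<in> insert Z P" using w that i unfolding W_def by auto
      ultimately show ?thesis using i by (simp add: lq_append)
    qed
    moreover have "drop i w \<in> lists S" using wl by (auto dest: in_set_dropD)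
    ultimately show ?thesis unfolding W_def by blast
  qed
  have "w = take i w @ drop i w" by simp
  moreover have "length (drop i w) < length w" using i by auto
  ultimately show ?thesis using u v by blast
qed

lemma W_loop:
  "w \<in> W S (insert Z P) Z Y \<Longrightarrow> w \<in> lconc (lstar (W S P Z Z)) (W S P Z Y)"
proof (induction "length w" arbitrary: w rule: less_induct)
  case less
  from W_split[OF less.prems] show ?case
  proof
    assume "w \<in> W S P Z Y"
    then show ?thesis using lconcI[OF lstar.lstar_nil] by fastforce
  next
    assume "\<exists>u v. w = u @ v \<and> u \<in> W S P Z Z \<and> v \<in> W S (insert Z P) Z Y \<and> length v < length w"
    then obtain u v where uv: "w = u @ v" "u \<in> W S P Z Z" "v \<in> W S (insert Z P) Z Y" "length v < length w"
      by blast
    from less.hyps[OF uv(4) uv(3)] obtain s t where st: "v = s @ t" "s \<in> lstar (W S P Z Z)" "t \<in> W S P Z Y"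
      unfolding lconc_def by blast
    have "u @ s \<in> lstar (W S P Z Z)" using uv(2) st(2) by (rule lstar_app)
    then have "(u @ s) @ t \<in> lconc (lstar (W S P Z Z)) (W S P Z Y)" using st(3) by (rule lconcI)
    then show ?thesis using uv(1) st(1) by simp
  qed
qed

lemma W_insert:
  "W S (insert Z P) X Y = W S P X Y \<union> lconc (W S P X Z) (lconc (lstar (W S P Z Z)) (W S P Z Y))"
proof
  show "W S (insert Z P) X Y \<subseteq> W S P X Y \<union> lconc (W S P X Z) (lconc (lstar (W S P Z Z)) (W S P Z Y))"
  proof
    fix w assume "w \<in> W S (insert Z P) X Y"
    from W_split[OF this] show "w \<in> W S P X Y \<union> lconc (W S P X Z) (lconc (lstar (W S P Z Z)) (W S P Z Y))"
    proof
      assume "\<exists>u v. w = u @ v \<and> u \<in> W S P X Z \<and> v \<in> W S (insert Z P) Z Y \<and> length v < length w"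
      then obtain u v where "w = u @ v" "u \<in> W S P X Z" "v \<in> W S (insert Z P) Z Y" by blast
      then show ?thesis using W_loop lconcI by blast
    qed simp
  qed
next
  have sub: "W S P A B \<subseteq> W S (insert Z P) A B" for A B by (rule W_mono) auto
  show "W S P X Y \<union> lconc (W S P X Z) (lconc (lstar (W S P Z Z)) (W S P Z Y)) \<subseteq> W S (insert Z P) X Y"
  proof
    fix w assume "w \<in> W S P X Y \<union> lconc (W S P X Z) (lconc (lstar (W S P Z Z)) (W S P Z Y))"
    then show "w \<in> W S (insert Z P) X Y"
    proof
      assume "w \<in> W S P X Y" then show ?thesis using sub by blast
    next
      assume "w \<in> lconc (W S P X Z) (lconc (lstar (W S P Z Z)) (W S P Z Y))"
      then obtain u s t where ust: "w = u @ s @ t" "u \<in> W S P X Z" "s \<in> lstar (W S P Z Z)" "t \<in> W S P Z Y"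
        by (auto elim!: lconcE)
      have s': "s \<in> W S (insert Z P) Z Z" using W_star ust(3) by blast
      have t': "t \<in> W S (insert Z P) Z Y" using sub ust(4) by blast
      have "s @ t \<in> W S (insert Z P) Z Y" by (rule W_concat[OF s' t']) simp
      moreover have "u \<in> W S (insert Z P) X Z" using ust(2) sub by blast
      ultimately have "u @ s @ t \<in> W S (insert Z P) X Y" using W_concat[of u S "insert Z P" X Z "s @ t" Y] by simp
      then show ?thesis using ust(1) by simp
    qed
  qed
qed

lemma W_regular: assumes "finite S" shows "finite P \<Longrightarrow> regular (W S P X Y)"
proof (induction P arbitrary: X Y rule: finite_induct)
  case empty
  then show ?case using assms by (simp add: W_empty reg_finite)
next
  case (insert Z P)
  then show ?case by (simp add: W_insert reg_union reg_conc reg_star)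
qed

lemma fin_reg_regular:
  assumes "fin_reg A" shows "regular A"
proof -
  from assms obtain S where S: "finite S" "A \<subseteq> lists S" and fq: "finite (range (\<lambda>u. lq u A))"
    unfolding fin_reg_def fin_quot_def by blast
  define Q where "Q = range (\<lambda>u. lq u A)"
  have eqA: "A = \<Union>((\<lambda>Y. W S Q A Y) ` {Y \<in> Q. [] \<in> Y})"
  proof (intro equalityI subsetI)
    fix w assume "w \<in> A"
    then have "w \<in> W S Q A (lq w A)" using S unfolding W_def Q_def by auto
    moreover have "lq w A \<in> {Y \<in> Q. [] \<in> Y}" using \<open>w \<in> A\<close> by (auto simp: Q_def lq_def)
    ultimately show "w \<in> \<Union>((\<lambda>Y. W S Q A Y) ` {Y \<in> Q. [] \<in> Y})" by blast
  next
    fix w assume "w \<in> \<Union>((\<lambda>Y. W S Q A Y) ` {Y \<in> Q. [] \<in> Y})"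
    then show "w \<in> A" by (auto simp: W_def lq_def)
  qed
  have regW: "regular (\<Union>((\<lambda>Y. W S Q A Y) ` {Y \<in> Q. [] \<in> Y}))"
    using fq S by (intro regular_Union) (auto simp: Q_def intro: W_regular)
  show ?thesis by (subst eqA) (rule regW)
qed

section \<open>Regular implies finitely many quotients\<close>

lemma lists_sub: "A \<subseteq> lists S \<Longrightarrow> S \<subseteq> S' \<Longrightarrow> A \<subseteq> lists S'"
  using lists_mono by blast

lemma lconc_lists: "A \<subseteq> lists S \<Longrightarrow> B \<subseteq> lists S \<Longrightarrow> lconc A B \<subseteq> lists S"
proof
  fix z assume "A \<subseteq> lists S" "B \<subseteq> lists S" "z \<in> lconc A B"
  from \<open>z \<in> lconc A B\<close> obtain x y where "z = x @ y" "x \<in> A" "y \<in> B" by (rule lconcE)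
  then show "z \<in> lists S" using \<open>A \<subseteq> lists S\<close> \<open>B \<subseteq> lists S\<close> by auto
qed

lemma regular_alph: "regular A \<Longrightarrow> \<exists>S. finite S \<and> A \<subseteq> lists S"
proof (induction rule: regular.induct)
  case (reg_finite A)
  have "A \<subseteq> lists (\<Union>(set ` A))" by auto
  then show ?case using reg_finite by blast
next
  case (reg_union A B)
  then obtain S1 S2 where "finite S1" "A \<subseteq> lists S1" "finite S2" "B \<subseteq> lists S2" by blast
  then have "A \<subseteq> lists (S1 \<union> S2)" "B \<subseteq> lists (S1 \<union> S2)"
    by (auto intro: lists_sub)
  then have "A \<union> B \<subseteq> lists (S1 \<union> S2)" by blast
  then show ?case using \<open>finite S1\<close> \<open>finite S2\<close> by blast
next
  case (reg_conc A B)
  then obtain S1 S2 where "finite S1" "A \<subseteq> lists S1" "finite S2" "B \<subseteq> lists S2" by blast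
  then have "A \<subseteq> lists (S1 \<union> S2)" "B \<subseteq> lists (S1 \<union> S2)"
    by (auto intro: lists_sub)
  then have "lconc A B \<subseteq> lists (S1 \<union> S2)" by (rule lconc_lists)
  then show ?case using \<open>finite S1\<close> \<open>finite S2\<close> by blast
next
  case (reg_star A)
  then obtain S where S: "finite S" "A \<subseteq> lists S" by blast
  have "x \<in> lists S" if "x \<in> lstar A" for x using that
    by (induction rule: lstar.induct) (use S in auto)
  then show ?case using S by blast
qed

lemma lq_finite: "finite A \<Longrightarrow> fin_quot A"
proof -
  assume fA: "finite A"
  have "range (\<lambda>u. lq u A) \<subseteq> Pow (\<Union>w\<in>A. set (suffixes w))"
    by (auto simp: lq_def suffix_def)
  moreover have "finite (Pow (\<Union>w\<in>A. set (suffixes w)))" using fA by simp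
  ultimately show ?thesis unfolding fin_quot_def by (rule finite_subset)
qed

lemma lq_union: "lq u (A \<union> B) = lq u A \<union> lq u B" by (auto simp: lq_def)

lemma lq_lconc: "lq u (lconc A B) = lconc (lq u A) B \<union> \<Union>((\<lambda>v. lq v B) ` {v. \<exists>t. u = t @ v \<and> t \<in> A})"
proof (intro equalityI subsetI)
  fix w assume "w \<in> lq u (lconc A B)"
  then obtain x y where xy: "u @ w = x @ y" "x \<in> A" "y \<in> B" by (auto simp: lq_def lconc_def)
  from xy(1) obtain us where "u = x @ us \<and> us @ w = y \<or> u @ us = x \<and> w = us @ y"
    by (auto simp: append_eq_append_conv2)
  then show "w \<in> lconc (lq u A) B \<union> \<Union>((\<lambda>v. lq v B) ` {v. \<exists>t. u = t @ v \<and> t \<in> A})"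
    using xy by (auto simp: lq_def lconc_def)
next
  fix w assume "w \<in> lconc (lq u A) B \<union> \<Union>((\<lambda>v. lq v B) ` {v. \<exists>t. u = t @ v \<and> t \<in> A})"
  then show "w \<in> lq u (lconc A B)"
    by (auto simp: lq_def lconc_def) (metis append.assoc)+
qed

lemma lq_lstar_aux:
  "z \<in> lstar A \<Longrightarrow> z = u @ w \<Longrightarrow> u \<noteq> [] \<Longrightarrow>
     \<exists>t v. u = t @ v \<and> t \<in> lstar A \<and> v \<noteq> [] \<and> w \<in> lconc (lq v A) (lstar A)"
proof (induction z arbitrary: u rule: lstar.induct)
  case lstar_nil then show ?case by simp
next
  case (lstar_app x y)
  from lstar_app.prems(1) obtain us where
    c: "x = u @ us \<and> w = us @ y \<or> x @ us = u \<and> y = us @ w"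
    by (auto simp: append_eq_append_conv2)
  then show ?case
  proof
    assume "x = u @ us \<and> w = us @ y"
    then have "w \<in> lconc (lq u A) (lstar A)" using lstar_app by (auto simp: lq_def lconc_def)
    then show ?thesis using lstar_app.prems(2) lstar_nil by force
  next
    assume a: "x @ us = u \<and> y = us @ w"
    show ?thesis
    proof (cases "us = []")
      case True
      then have "[] \<in> lq u A" using a lstar_app by (simp add: lq_def)
      then have "[] @ w \<in> lconc (lq u A) (lstar A)" using a lstar_app True by (intro lconcI) auto
      then have "w \<in> lconc (lq u A) (lstar A)" by simp
      then show ?thesis using lstar_app.prems(2) lstar_nil by force
    next
      case False
      from lstar_app.IH[OF _ False] a obtain t v where
        "us = t @ v" "t \<in> lstar A" "v \<noteq> []" "w \<in> lconc (lq v A) (lstar A)" by blast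
      moreover have "x @ t \<in> lstar A" using lstar_app.hyps(1) \<open>t \<in> lstar A\<close> by (rule lstar.lstar_app)
      ultimately show ?thesis using a by (intro exI[of _ "x @ t"] exI[of _ v]) auto
    qed
  qed
qed

lemma lq_lstar: "u \<noteq> [] \<Longrightarrow>
  lq u (lstar A) = \<Union>((\<lambda>v. lconc (lq v A) (lstar A)) ` {v. \<exists>t. u = t @ v \<and> t \<in> lstar A \<and> v \<noteq> []})"
proof (intro equalityI subsetI)
  fix w assume "u \<noteq> []" "w \<in> lq u (lstar A)"
  then show "w \<in> \<Union>((\<lambda>v. lconc (lq v A) (lstar A)) ` {v. \<exists>t. u = t @ v \<and> t \<in> lstar A \<and> v \<noteq> []})"
    using lq_lstar_aux[of "u @ w" A u w] by (auto simp: lq_def)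
next
  fix w assume "w \<in> \<Union>((\<lambda>v. lconc (lq v A) (lstar A)) ` {v. \<exists>t. u = t @ v \<and> t \<in> lstar A \<and> v \<noteq> []})"
  then obtain t v x y where "u = t @ v" "t \<in> lstar A" "v @ x \<in> A" "y \<in> lstar A" "w = x @ y"
    by (auto simp: lq_def lconc_def)
  then have "t @ ((v @ x) @ y) \<in> lstar A" by (intro lstar_append lstar.lstar_app)
  then show "w \<in> lq u (lstar A)" using \<open>u = t @ v\<close> \<open>w = x @ y\<close> by (simp add: lq_def)
qed

lemma regular_fin_quot: "regular A \<Longrightarrow> fin_quot A"
proof (induction rule: regular.induct)
  case (reg_finite A)
  then show ?case by (rule lq_finite)
next
  case (reg_union A B)
  have "range (\<lambda>u. lq u (A \<union> B)) \<subseteq> (\<lambda>(X, Y). X \<union> Y) ` (range (\<lambda>u. lq u A) \<times> range (\<lambda>u. lq u B))"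
    by (auto simp: lq_union)
  moreover have "finite ((\<lambda>(X, Y). X \<union> Y) ` (range (\<lambda>u. lq u A) \<times> range (\<lambda>u. lq u B)))"
    using reg_union.IH unfolding fin_quot_def by simp
  ultimately show ?case unfolding fin_quot_def by (rule finite_subset)
next
  case (reg_conc A B)
  have "range (\<lambda>u. lq u (lconc A B)) \<subseteq>
     (\<lambda>(X, Y). lconc X B \<union> \<Union>Y) ` (range (\<lambda>u. lq u A) \<times> Pow (range (\<lambda>u. lq u B)))"
    by (auto simp: lq_lconc)
  moreover have "finite ((\<lambda>(X, Y). lconc X B \<union> \<Union>Y) ` (range (\<lambda>u. lq u A) \<times> Pow (range (\<lambda>u. lq u B))))"
    using reg_conc.IH unfolding fin_quot_def by simp
  ultimately show ?case unfolding fin_quot_def by (rule finite_subset)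
next
  case (reg_star A)
  have "range (\<lambda>u. lq u (lstar A)) \<subseteq>
     insert (lstar A) ((\<lambda>Y. \<Union>((\<lambda>X. lconc X (lstar A)) ` Y)) ` Pow (range (\<lambda>u. lq u A)))"
  proof
    fix Z assume "Z \<in> range (\<lambda>u. lq u (lstar A))"
    then obtain u where Z: "Z = lq u (lstar A)" by blast
    show "Z \<in> insert (lstar A) ((\<lambda>Y. \<Union>((\<lambda>X. lconc X (lstar A)) ` Y)) ` Pow (range (\<lambda>u. lq u A)))"
    proof (cases "u = []")
      case True then show ?thesis using Z by simp
    next
      case False
      then have "Z = (\<lambda>Y. \<Union>((\<lambda>X. lconc X (lstar A)) ` Y)) ((\<lambda>v. lq v A) ` {v. \<exists>t. u = t @ v \<and> t \<in> lstar A \<and> v \<noteq> []})"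
        using Z lq_lstar by (simp add: image_image)
      then show ?thesis by blast
    qed
  qed
  moreover have "finite (insert (lstar A) ((\<lambda>Y. \<Union>((\<lambda>X. lconc X (lstar A)) ` Y)) ` Pow (range (\<lambda>u. lq u A))))"
    using reg_star.IH unfolding fin_quot_def by simp
  ultimately show ?case unfolding fin_quot_def by (rule finite_subset)
qed

lemma regular_fin_reg: "regular A \<longleftrightarrow> fin_reg A"
proof
  assume "regular A"
  then show "fin_reg A" unfolding fin_reg_def using regular_fin_quot[of A] regular_alph[of A] by simp
next
  assume "fin_reg A"
  then show "regular A" by (rule fin_reg_regular)
qed

section \<open>Closure properties\<close>

lemma regular_Int: "regular A \<Longrightarrow> regular B \<Longrightarrow> regular (A \<inter> B)"
proof -
  assume "regular A" "regular B"
  then have fa: "fin_reg A" and fb: "fin_reg B" by (simp_all add: regular_fin_reg)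
  have "range (\<lambda>u. lq u (A \<inter> B)) \<subseteq> (\<lambda>(X, Y). X \<inter> Y) ` (range (\<lambda>u. lq u A) \<times> range (\<lambda>u. lq u B))"
    by (auto simp: lq_def)
  moreover have "finite ((\<lambda>(X, Y). X \<inter> Y) ` (range (\<lambda>u. lq u A) \<times> range (\<lambda>u. lq u B)))"
    using fa fb unfolding fin_reg_def fin_quot_def by simp
  ultimately have "fin_quot (A \<inter> B)" unfolding fin_quot_def by (rule finite_subset)
  moreover have "\<exists>S. finite S \<and> A \<inter> B \<subseteq> lists S" using fa unfolding fin_reg_def by blast
  ultimately show ?thesis by (simp add: regular_fin_reg fin_reg_def)
qed

lemma regular_lq: "regular A \<Longrightarrow> regular (lq u A)"
proof -
  assume "regular A"
  then have fa: "fin_reg A" by (simp add: regular_fin_reg)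
  then obtain S where "finite S" "A \<subseteq> lists S" unfolding fin_reg_def by blast
  then have "lq u A \<subseteq> lists S" by (auto simp: lq_def)
  moreover have "fin_quot (lq u A)" using fa fin_quot_lq unfolding fin_reg_def by blast
  ultimately show ?thesis using \<open>finite S\<close> by (auto simp: regular_fin_reg fin_reg_def)
qed

definition hom :: "('a \<Rightarrow> 'b list) \<Rightarrow> 'a list \<Rightarrow> 'b list" where
  "hom g w = concat (map g w)"

lemma hom_Nil[simp]: "hom g [] = []" and hom_Cons[simp]: "hom g (a # w) = g a @ hom g w"
  and hom_append[simp]: "hom g (u @ v) = hom g u @ hom g v"
  by (simp_all add: hom_def)

lemma fin_reg_inv_hom:
  assumes "finite S" "fin_quot X"
  shows "regular {w \<in> lists S. hom g w \<in> X}"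
proof -
  have "range (\<lambda>u. lq u {w \<in> lists S. hom g w \<in> X}) \<subseteq>
      insert {} ((\<lambda>Y. {v \<in> lists S. hom g v \<in> Y}) ` range (\<lambda>u. lq u X))"
  proof
    fix Z assume "Z \<in> range (\<lambda>u. lq u {w \<in> lists S. hom g w \<in> X})"
    then obtain u where Z: "Z = lq u {w \<in> lists S. hom g w \<in> X}" by blast
    show "Z \<in> insert {} ((\<lambda>Y. {v \<in> lists S. hom g v \<in> Y}) ` range (\<lambda>u. lq u X))"
    proof (cases "u \<in> lists S")
      case True
      then have "Z = {v \<in> lists S. hom g v \<in> lq (hom g u) X}" using Z by (auto simp: lq_def)
      then show ?thesis by blast
    next
      case False
      then have "Z = {}" using Z by (auto simp: lq_def)
      then show ?thesis by blast
    qed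
  qed
  moreover have "finite (insert {} ((\<lambda>Y. {v \<in> lists S. hom g v \<in> Y}) ` range (\<lambda>u. lq u X)))"
    using assms unfolding fin_quot_def by simp
  ultimately have "fin_quot {w \<in> lists S. hom g w \<in> X}" unfolding fin_quot_def by (rule finite_subset)
  then show ?thesis using assms(1) by (auto simp: regular_fin_reg fin_reg_def)
qed

lemma regular_hom_image: "regular A \<Longrightarrow> regular (hom g ` A)"
proof (induction rule: regular.induct)
  case (reg_finite A) then show ?case by (simp add: regular.reg_finite)
next
  case (reg_union A B) then show ?case by (simp add: image_Un regular.reg_union)
next
  case (reg_conc A B)
  have "hom g ` lconc A B = lconc (hom g ` A) (hom g ` B)"
  proof (intro equalityI subsetI)
    fix z assume "z \<in> hom g ` lconc A B"
    then obtain x y where "z = hom g (x @ y)" "x \<in> A" "y \<in> B" by (auto elim: lconcE)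
    then show "z \<in> lconc (hom g ` A) (hom g ` B)" by (auto intro: lconcI)
  next
    fix z assume "z \<in> lconc (hom g ` A) (hom g ` B)"
    then obtain x y where "z = hom g x @ hom g y" "x \<in> A" "y \<in> B" by (auto elim: lconcE)
    then have "z = hom g (x @ y)" "x @ y \<in> lconc A B" by (auto intro: lconcI)
    then show "z \<in> hom g ` lconc A B" by blast
  qed
  then show ?case using reg_conc by (simp add: regular.reg_conc)
next
  case (reg_star A)
  have "hom g ` lstar A = lstar (hom g ` A)"
  proof (intro equalityI subsetI)
    fix z assume "z \<in> hom g ` lstar A"
    then obtain x where "x \<in> lstar A" "z = hom g x" by blast
    then show "z \<in> lstar (hom g ` A)"
      by (induction x arbitrary: z rule: lstar.induct) (auto intro: lstar.intros)
  next
    fix z assume "z \<in> lstar (hom g ` A)"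
    then show "z \<in> hom g ` lstar A"
    proof (induction z rule: lstar.induct)
      case lstar_nil
      then show ?case using lstar.lstar_nil by force
    next
      case (lstar_app x y)
      then obtain x' y' where "x' \<in> A" "x = hom g x'" "y' \<in> lstar A" "y = hom g y'" by blast
      then show ?case by (metis hom_append image_eqI lstar.lstar_app)
    qed
  qed
  then show ?case using reg_star by (simp add: regular.reg_star)
qed

lemma regular_Int_lists: "regular A \<Longrightarrow> regular (A \<inter> lists S)"
proof (induction rule: regular.induct)
  case (reg_finite A) then show ?case by (simp add: regular.reg_finite)
next
  case (reg_union A B) then show ?case by (simp add: Int_Un_distrib2 regular.reg_union)
next
  case (reg_conc A B)
  have "lconc A B \<inter> lists S = lconc (A \<inter> lists S) (B \<inter> lists S)"
    by (auto elim!: lconcE intro: lconcI)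
  then show ?case using reg_conc by (simp add: regular.reg_conc)
next
  case (reg_star A)
  have "lstar A \<inter> lists S = lstar (A \<inter> lists S)"
  proof (intro equalityI subsetI)
    fix z assume "z \<in> lstar A \<inter> lists S"
    then have "z \<in> lstar A" "z \<in> lists S" by auto
    then show "z \<in> lstar (A \<inter> lists S)"
      by (induction z rule: lstar.induct) (auto intro: lstar.intros)
  next
    fix z assume "z \<in> lstar (A \<inter> lists S)"
    then show "z \<in> lstar A \<inter> lists S"
      by (induction z rule: lstar.induct) (auto intro: lstar.intros)
  qed
  then show ?case using reg_star by (simp add: regular.reg_star)
qed

section \<open>Path languages of finite automata\<close>

inductive lpath :: "('s \<times> 'a \<times> 's) set \<Rightarrow> 's \<Rightarrow> 'a list \<Rightarrow> 's \<Rightarrow> bool" for T where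
  lp_nil: "lpath T p [] p"
| lp_cons: "(p, a, r) \<in> T \<Longrightarrow> lpath T r w q \<Longrightarrow> lpath T p (a # w) q"

lemma lpath_Nil_iff: "lpath T p [] q \<longleftrightarrow> p = q"
  by (auto intro: lpath.intros elim: lpath.cases)

lemma lpath_Cons_iff: "lpath T p (a # w) q \<longleftrightarrow> (\<exists>r. (p, a, r) \<in> T \<and> lpath T r w q)"
  by (auto intro: lpath.intros elim: lpath.cases)

lemma lpath_append: "lpath T p (u @ v) q \<longleftrightarrow> (\<exists>r. lpath T p u r \<and> lpath T r v q)"
  by (induction u arbitrary: p) (auto simp: lpath_Nil_iff lpath_Cons_iff)

lemma lpath_snoc: "lpath T p u r \<Longrightarrow> (r, a, q) \<in> T \<Longrightarrow> lpath T p (u @ [a]) q"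
  unfolding lpath_append by (auto simp: lpath_Cons_iff lpath_Nil_iff)

lemma lpath_in: "lpath T p w q \<Longrightarrow> p \<in> K \<Longrightarrow> T \<subseteq> K \<times> L \<times> K \<Longrightarrow> q \<in> K \<and> w \<in> lists L"
  by (induction rule: lpath.induct) auto

lemma lpath_regular:
  assumes "finite K" "finite L" "T \<subseteq> K \<times> L \<times> K" "p \<in> K"
  shows "regular {w. lpath T p w q}"
proof -
  have "range (\<lambda>u. lq u {w. lpath T p w q}) \<subseteq> (\<lambda>R. \<Union>r\<in>R. {w. lpath T r w q}) ` Pow K"
  proof
    fix Z assume "Z \<in> range (\<lambda>u. lq u {w. lpath T p w q})"
    then obtain u where Z: "Z = lq u {w. lpath T p w q}" by blast
    then have "Z = (\<Union>r\<in>{r. lpath T p u r}. {w. lpath T r w q})" by (auto simp: lq_def lpath_append)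
    moreover have "{r. lpath T p u r} \<subseteq> K" using lpath_in[OF _ assms(4) assms(3)] by blast
    ultimately show "Z \<in> (\<lambda>R. \<Union>r\<in>R. {w. lpath T r w q}) ` Pow K" by blast
  qed
  moreover have "finite ((\<lambda>R. \<Union>r\<in>R. {w. lpath T r w q}) ` Pow K)" using assms(1) by simp
  ultimately have "fin_quot {w. lpath T p w q}" unfolding fin_quot_def by (rule finite_subset)
  moreover have "{w. lpath T p w q} \<subseteq> lists L" using lpath_in[OF _ assms(4) assms(3)] by blast
  ultimately have "fin_reg {w. lpath T p w q}" unfolding fin_reg_def using assms(2) by blast
  then show ?thesis by (simp add: regular_fin_reg)
qed

definition emb :: "'e \<Rightarrow> 'm list set \<Rightarrow> ('e \<Rightarrow> 'm list) set" where
  "emb \<xi> A = (\<lambda>w \<zeta>. if \<zeta> = \<xi> then w else []) ` A"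

lemma cprodI: "x \<in> A \<Longrightarrow> y \<in> B \<Longrightarrow> (\<lambda>\<xi>. x \<xi> @ y \<xi>) \<in> cprod A B"
  unfolding cprod_def by blast

lemma cprodE: "z \<in> cprod A B \<Longrightarrow> (\<And>x y. z = (\<lambda>\<xi>. x \<xi> @ y \<xi>) \<Longrightarrow> x \<in> A \<Longrightarrow> y \<in> B \<Longrightarrow> P) \<Longrightarrow> P"
  unfolding cprod_def by blast

lemma embI: "w \<in> A \<Longrightarrow> (\<lambda>\<zeta>. if \<zeta> = \<xi> then w else []) \<in> emb \<xi> A"
  unfolding emb_def by blast

lemma embE: "C \<in> emb \<xi> A \<Longrightarrow> (\<And>w. C = (\<lambda>\<zeta>. if \<zeta> = \<xi> then w else []) \<Longrightarrow> w \<in> A \<Longrightarrow> P) \<Longrightarrow> P"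
  unfolding emb_def by blast

lemma emb_app: "(\<lambda>\<zeta>. (\<lambda>\<zeta>. if \<zeta> = \<xi> then u else []) \<zeta> @ (\<lambda>\<zeta>. if \<zeta> = \<xi> then v else []) \<zeta>)
   = (\<lambda>\<zeta>. if \<zeta> = \<xi> then u @ v else [])"
  by auto

lemma emb_cprodI: "u \<in> A \<Longrightarrow> v \<in> B \<Longrightarrow> (\<lambda>\<zeta>. if \<zeta> = \<xi> then u @ v else []) \<in> cprod (emb \<xi> A) (emb \<xi> B)"
  unfolding cprod_def emb_def
  by (intro CollectI exI[of _ "\<lambda>\<zeta>. if \<zeta> = \<xi> then u else []"] exI[of _ "\<lambda>\<zeta>. if \<zeta> = \<xi> then v else []"] conjI)
    (auto simp: fun_eq_iff)

lemma emb_lconc: "emb \<xi> (lconc A B) = cprod (emb \<xi> A) (emb \<xi> B)"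
proof (intro equalityI subsetI)
  fix C assume "C \<in> emb \<xi> (lconc A B)"
  then obtain u v where "u \<in> A" "v \<in> B" "C = (\<lambda>\<zeta>. if \<zeta> = \<xi> then u @ v else [])"
    by (auto elim!: embE lconcE)
  then show "C \<in> cprod (emb \<xi> A) (emb \<xi> B)" using emb_cprodI by simp
next
  fix C assume "C \<in> cprod (emb \<xi> A) (emb \<xi> B)"
  then obtain u v where "u \<in> A" "v \<in> B"
      "C = (\<lambda>\<zeta>. (\<lambda>\<zeta>. if \<zeta> = \<xi> then u else []) \<zeta> @ (\<lambda>\<zeta>. if \<zeta> = \<xi> then v else []) \<zeta>)"
    by (auto elim!: embE cprodE)
  then have e: "C = (\<lambda>\<zeta>. if \<zeta> = \<xi> then u @ v else [])" by (auto simp: fun_eq_iff)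
  show "C \<in> emb \<xi> (lconc A B)" unfolding e by (rule embI[OF lconcI]) fact+
qed

lemma emb_lstar: "emb \<xi> (lstar A) = cstar (emb \<xi> A)"
proof (intro equalityI subsetI)
  fix C assume "C \<in> emb \<xi> (lstar A)"
  then obtain w where w: "w \<in> lstar A" "C = (\<lambda>\<zeta>. if \<zeta> = \<xi> then w else [])" by (auto simp: emb_def)
  from w show "C \<in> cstar (emb \<xi> A)"
  proof (induction w arbitrary: C rule: lstar.induct)
    case lstar_nil
    have "C = (\<lambda>\<zeta>. [])" using lstar_nil by auto
    then show ?case by (simp add: cstar.cstar_unit)
  next
    case (lstar_app x y)
    have h1: "(\<lambda>\<zeta>. if \<zeta> = \<xi> then y else []) \<in> cstar (emb \<xi> A)" using lstar_app.IH by simp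
    have h2: "(\<lambda>\<zeta>. if \<zeta> = \<xi> then x else []) \<in> emb \<xi> A" using lstar_app.hyps(1) by (rule embI)
    have e: "C = (\<lambda>\<zeta>. (\<lambda>\<zeta>. if \<zeta> = \<xi> then x else []) \<zeta> @ (\<lambda>\<zeta>. if \<zeta> = \<xi> then y else []) \<zeta>)"
      using lstar_app.prems by (auto simp: fun_eq_iff)
    show ?case unfolding e by (rule cstar.cstar_app[OF h2 h1])
  qed
next
  fix C assume "C \<in> cstar (emb \<xi> A)"
  then show "C \<in> emb \<xi> (lstar A)"
  proof (induction C rule: cstar.induct)
    case cstar_unit
    have "(\<lambda>\<xi>'. []) = (\<lambda>\<zeta>. if \<zeta> = \<xi> then [] else [])" by auto
    have "[] \<in> lstar A" by (rule lstar.lstar_nil)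
    from embI[OF this, of \<xi>] show ?case by simp
  next
    case (cstar_app x y)
    then obtain u v where "u \<in> A" "v \<in> lstar A" "x = (\<lambda>\<zeta>. if \<zeta> = \<xi> then u else [])"
      "y = (\<lambda>\<zeta>. if \<zeta> = \<xi> then v else [])" by (auto elim!: embE)
    then have e: "(\<lambda>\<xi>. x \<xi> @ y \<xi>) = (\<lambda>\<zeta>. if \<zeta> = \<xi> then u @ v else [])" by (auto simp: fun_eq_iff)
    show ?case unfolding e by (rule embI[OF lstar.lstar_app]) fact+
  qed
qed

lemma rat_emb: "regular A \<Longrightarrow> rational M (emb \<xi> (A \<inter> lists (M \<xi>)))"
proof (induction rule: regular.induct)
  case (reg_finite A)
  have "emb \<xi> (A \<inter> lists (M \<xi>)) \<subseteq> chan_monoid M" by (auto simp: emb_def chan_monoid_def)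
  then show ?case using reg_finite by (intro rat_finite) (auto simp: emb_def)
next
  case (reg_union A B)
  then show ?case by (simp add: emb_def Int_Un_distrib2 image_Un rat_union)
next
  case (reg_conc A B)
  have "lconc A B \<inter> lists (M \<xi>) = lconc (A \<inter> lists (M \<xi>)) (B \<inter> lists (M \<xi>))"
    by (auto elim!: lconcE intro: lconcI)
  then show ?case using reg_conc by (simp add: emb_lconc rat_prod)
next
  case (reg_star A)
  have "lstar A \<inter> lists (M \<xi>) = lstar (A \<inter> lists (M \<xi>))"
  proof (intro equalityI subsetI)
    fix z assume "z \<in> lstar A \<inter> lists (M \<xi>)"
    then have "z \<in> lstar A" "z \<in> lists (M \<xi>)" by auto
    then show "z \<in> lstar (A \<inter> lists (M \<xi>))"
      by (induction z rule: lstar.induct) (auto intro: lstar.intros)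
  next
    fix z assume "z \<in> lstar (A \<inter> lists (M \<xi>))"
    then show "z \<in> lstar A \<inter> lists (M \<xi>)"
      by (induction z rule: lstar.induct) (auto intro: lstar.intros)
  qed
  then show ?case using reg_star by (simp add: emb_lstar rat_star)
qed

lemma rat_block_aux:
  fixes L :: "'e \<Rightarrow> 'm list set"
  assumes L: "\<And>\<zeta>. regular (L \<zeta>) \<and> L \<zeta> \<subseteq> lists (M \<zeta>)"
  shows "finite E0 \<Longrightarrow> rational M {C. (\<forall>\<zeta>\<in>E0. C \<zeta> \<in> L \<zeta>) \<and> (\<forall>\<zeta>. \<zeta> \<notin> E0 \<longrightarrow> C \<zeta> = [])}"
proof (induction E0 rule: finite_induct)
  case empty
  have "{C. (\<forall>\<zeta>\<in>{}. C \<zeta> \<in> L \<zeta>) \<and> (\<forall>\<zeta>. \<zeta> \<notin> {} \<longrightarrow> C \<zeta> = [])} = {(\<lambda>\<zeta>. [])}" by auto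
  then show ?case by (auto intro!: rat_finite simp: chan_monoid_def)
next
  case (insert \<xi> E0)
  let ?P = "{C. (\<forall>\<zeta>\<in>E0. C \<zeta> \<in> L \<zeta>) \<and> (\<forall>\<zeta>. \<zeta> \<notin> E0 \<longrightarrow> C \<zeta> = [])}"
  have eq: "{C. (\<forall>\<zeta>\<in>insert \<xi> E0. C \<zeta> \<in> L \<zeta>) \<and> (\<forall>\<zeta>. \<zeta> \<notin> insert \<xi> E0 \<longrightarrow> C \<zeta> = [])}
        = cprod (emb \<xi> (L \<xi> \<inter> lists (M \<xi>))) ?P"
  proof (intro equalityI subsetI)
    fix C assume C: "C \<in> {C. (\<forall>\<zeta>\<in>insert \<xi> E0. C \<zeta> \<in> L \<zeta>) \<and> (\<forall>\<zeta>. \<zeta> \<notin> insert \<xi> E0 \<longrightarrow> C \<zeta> = [])}"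
    have e: "C = (\<lambda>\<zeta>. (\<lambda>\<zeta>. if \<zeta> = \<xi> then C \<xi> else []) \<zeta> @ (C(\<xi> := [])) \<zeta>)" by (auto simp: fun_eq_iff)
    have "C \<xi> \<in> L \<xi> \<inter> lists (M \<xi>)" using C L by auto
    then have h1: "(\<lambda>\<zeta>. if \<zeta> = \<xi> then C \<xi> else []) \<in> emb \<xi> (L \<xi> \<inter> lists (M \<xi>))"
      by (rule embI)
    have h2: "C(\<xi> := []) \<in> ?P" using C insert.hyps(2) by auto
    show "C \<in> cprod (emb \<xi> (L \<xi> \<inter> lists (M \<xi>))) ?P" by (subst e) (rule cprodI[OF h1 h2])
  next
    fix C assume "C \<in> cprod (emb \<xi> (L \<xi> \<inter> lists (M \<xi>))) ?P"
    then obtain w y where "w \<in> L \<xi>" "y \<in> ?P" "C = (\<lambda>\<zeta>. (if \<zeta> = \<xi> then w else []) @ y \<zeta>)"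
      unfolding cprod_def emb_def by auto
    then show "C \<in> {C. (\<forall>\<zeta>\<in>insert \<xi> E0. C \<zeta> \<in> L \<zeta>) \<and> (\<forall>\<zeta>. \<zeta> \<notin> insert \<xi> E0 \<longrightarrow> C \<zeta> = [])}"
      using insert.hyps(2) by auto
  qed
  show ?case unfolding eq using insert.IH L by (intro rat_prod rat_emb) auto
qed

lemma recognizable_rational:
  fixes A :: "('e::finite \<Rightarrow> 'm list) set"
  assumes "recognizable M A" shows "rational M A"
proof -
  obtain F :: "('e \<Rightarrow> 'm list set) set" where F: "finite F" "\<forall>L\<in>F. \<forall>\<xi>. L \<xi> \<subseteq> lists (M \<xi>) \<and> regular (L \<xi>)"
    "A = (\<Union>L\<in>F. {C. \<forall>\<xi>. C \<xi> \<in> L \<xi>})" using assms unfolding recognizable_def by blast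
  have blk: "rational M {C. \<forall>\<xi>. C \<xi> \<in> L \<xi>}" if "L \<in> F" for L
    using rat_block_aux[of L M UNIV] F(2) that by simp
  have "finite G \<Longrightarrow> G \<subseteq> F \<Longrightarrow> rational M (\<Union>L\<in>G. {C. \<forall>\<xi>. C \<xi> \<in> L \<xi>})" for G
    by (induction G rule: finite_induct) (auto intro: rat_finite rat_union blk)
  then show ?thesis using F by simp
qed

definition Zp :: "'e \<Rightarrow> ('e \<Rightarrow> 'm list) set \<Rightarrow> 'm list set" where
  "Zp \<beta> R = {C \<beta> | C. C \<in> R \<and> (\<forall>\<xi>. \<xi> \<noteq> \<beta> \<longrightarrow> C \<xi> = [])}"

lemma ZpI: "C \<in> R \<Longrightarrow> (\<forall>\<xi>. \<xi> \<noteq> \<beta> \<longrightarrow> C \<xi> = []) \<Longrightarrow> C \<beta> \<in> Zp \<beta> R"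
  unfolding Zp_def by blast

lemma rational_Zp: "rational M R \<Longrightarrow> regular (Zp \<beta> R)"
proof (induction rule: rational.induct)
  case (rat_finite A)
  have "Zp \<beta> A \<subseteq> (\<lambda>C. C \<beta>) ` A" by (auto simp: Zp_def)
  moreover have "finite ((\<lambda>C. C \<beta>) ` A)" using rat_finite by simp
  ultimately show ?case by (intro reg_finite) (rule finite_subset)
next
  case (rat_union A B)
  have "Zp \<beta> (A \<union> B) = Zp \<beta> A \<union> Zp \<beta> B" by (auto simp: Zp_def)
  then show ?case using rat_union by (simp add: reg_union)
next
  case (rat_prod A B)
  have "Zp \<beta> (cprod A B) = lconc (Zp \<beta> A) (Zp \<beta> B)"
  proof (intro equalityI subsetI)
    fix w assume "w \<in> Zp \<beta> (cprod A B)"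
    then obtain x y where "x \<in> A" "y \<in> B" "w = x \<beta> @ y \<beta>" "\<forall>\<xi>. \<xi> \<noteq> \<beta> \<longrightarrow> x \<xi> @ y \<xi> = []"
      unfolding Zp_def cprod_def by auto
    then show "w \<in> lconc (Zp \<beta> A) (Zp \<beta> B)" unfolding Zp_def lconc_def by auto
  next
    fix w assume "w \<in> lconc (Zp \<beta> A) (Zp \<beta> B)"
    then obtain x y where "x \<in> A" "y \<in> B" "w = x \<beta> @ y \<beta>" "\<forall>\<xi>. \<xi> \<noteq> \<beta> \<longrightarrow> x \<xi> = []"
       "\<forall>\<xi>. \<xi> \<noteq> \<beta> \<longrightarrow> y \<xi> = []"
      unfolding Zp_def lconc_def by auto
    then have "(\<lambda>\<zeta>. x \<zeta> @ y \<zeta>) \<beta> \<in> Zp \<beta> (cprod A B)"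
      by (intro ZpI cprodI) auto
    then show "w \<in> Zp \<beta> (cprod A B)" using \<open>w = x \<beta> @ y \<beta>\<close> by simp
  qed
  then show ?case using rat_prod by (simp add: reg_conc)
next
  case (rat_star A)
  have "Zp \<beta> (cstar A) = lstar (Zp \<beta> A)"
  proof (intro equalityI subsetI)
    fix w assume "w \<in> Zp \<beta> (cstar A)"
    then obtain C where C: "C \<in> cstar A" "w = C \<beta>" "\<forall>\<xi>. \<xi> \<noteq> \<beta> \<longrightarrow> C \<xi> = []" unfolding Zp_def by auto
    have "(\<forall>\<xi>. \<xi> \<noteq> \<beta> \<longrightarrow> C \<xi> = []) \<longrightarrow> C \<beta> \<in> lstar (Zp \<beta> A)" using C(1)
    proof (induction C rule: cstar.induct)
      case cstar_unit then show ?case by (simp add: lstar.lstar_nil)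
    next
      case (cstar_app x y)
      show ?case
      proof
        assume "\<forall>\<xi>. \<xi> \<noteq> \<beta> \<longrightarrow> x \<xi> @ y \<xi> = []"
        then have "x \<beta> \<in> Zp \<beta> A" "y \<beta> \<in> lstar (Zp \<beta> A)" using cstar_app unfolding Zp_def by auto
        then show "x \<beta> @ y \<beta> \<in> lstar (Zp \<beta> A)" by (rule lstar.lstar_app)
      qed
    qed
    then show "w \<in> lstar (Zp \<beta> A)" using C by simp
  next
    fix w assume "w \<in> lstar (Zp \<beta> A)"
    then show "w \<in> Zp \<beta> (cstar A)"
    proof (induction w rule: lstar.induct)
      case lstar_nil
      then show ?case unfolding Zp_def using cstar.cstar_unit by force
    next
      case (lstar_app x y)
      then obtain X Y where "X \<in> A" "x = X \<beta>" "\<forall>\<xi>. \<xi> \<noteq> \<beta> \<longrightarrow> X \<xi> = []"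
        "Y \<in> cstar A" "y = Y \<beta>" "\<forall>\<xi>. \<xi> \<noteq> \<beta> \<longrightarrow> Y \<xi> = []" unfolding Zp_def by auto
      then have "(\<lambda>\<zeta>. X \<zeta> @ Y \<zeta>) \<beta> \<in> Zp \<beta> (cstar A)"
        by (intro ZpI cstar.cstar_app) auto
      then show ?case using \<open>x = X \<beta>\<close> \<open>y = Y \<beta>\<close> by simp
    qed
  qed
  then show ?case using rat_star by (simp add: reg_star)
qed

definition rcv1 :: "'m act \<Rightarrow> 'm list" where
  "rcv1 a = (case a of Rcv b \<Rightarrow> [b] | Snd b \<Rightarrow> [])"
definition snd1 :: "'m act \<Rightarrow> 'm list" where
  "snd1 a = (case a of Snd b \<Rightarrow> [b] | Rcv b \<Rightarrow> [])"

lemma rcv1_simps[simp]: "rcv1 (Rcv b) = [b]" "rcv1 (Snd b) = []"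
  and snd1_simps[simp]: "snd1 (Snd b) = [b]" "snd1 (Rcv b) = []"
  by (simp_all add: rcv1_def snd1_def)

abbreviation rcvs :: "'m act list \<Rightarrow> 'm list" where "rcvs \<equiv> hom rcv1"
abbreviation snds :: "'m act list \<Rightarrow> 'm list" where "snds \<equiv> hom snd1"

definition blk :: "('e \<Rightarrow> 'm list set) \<Rightarrow> ('e \<Rightarrow> 'm list) set" where
  "blk L = {C. \<forall>\<zeta>. C \<zeta> \<in> L \<zeta>}"

lemma recognizable_blk: "recognizable M A \<longleftrightarrow>
     (\<exists>F. finite F \<and> (\<forall>L\<in>F. \<forall>\<xi>. L \<xi> \<subseteq> lists (M \<xi>) \<and> regular (L \<xi>)) \<and> A = (\<Union>L\<in>F. blk L))"
  unfolding recognizable_def blk_def by simp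

lemma recognizable_Union:
  assumes "finite AA" "\<forall>A\<in>AA. recognizable M A"
  shows "recognizable M (\<Union>AA)"
proof -
  have "\<forall>A\<in>AA. \<exists>F. finite F \<and> (\<forall>L\<in>F. \<forall>\<xi>. L \<xi> \<subseteq> lists (M \<xi>) \<and> regular (L \<xi>)) \<and> A = (\<Union>L\<in>F. blk L)"
    using assms(2) by (simp add: recognizable_blk)
  then obtain Fs where Fs: "\<forall>A\<in>AA. finite (Fs A) \<and> (\<forall>L\<in>Fs A. \<forall>\<xi>. L \<xi> \<subseteq> lists (M \<xi>) \<and> regular (L \<xi>))
      \<and> A = (\<Union>L\<in>Fs A. blk L)"
    by metis
  have "finite (\<Union>A\<in>AA. Fs A)" using Fs assms(1) by blast
  moreover have "\<forall>L\<in>(\<Union>A\<in>AA. Fs A). \<forall>\<xi>. L \<xi> \<subseteq> lists (M \<xi>) \<and> regular (L \<xi>)" using Fs by blast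
  moreover have "\<Union>AA = (\<Union>L\<in>(\<Union>A\<in>AA. Fs A). blk L)"
  proof (intro equalityI subsetI)
    fix C assume "C \<in> \<Union>AA"
    then obtain A where "A \<in> AA" "C \<in> A" by blast
    then obtain L where "L \<in> Fs A" "C \<in> blk L" using Fs by blast
    then show "C \<in> (\<Union>L\<in>(\<Union>A\<in>AA. Fs A). blk L)" using \<open>A \<in> AA\<close> by blast
  next
    fix C assume "C \<in> (\<Union>L\<in>(\<Union>A\<in>AA. Fs A). blk L)"
    then obtain A L where "A \<in> AA" "L \<in> Fs A" "C \<in> blk L" by blast
    then have "C \<in> A" using Fs by blast
    then show "C \<in> \<Union>AA" using \<open>A \<in> AA\<close> by blast
  qed
  ultimately show ?thesis unfolding recognizable_blk by blast
qed

definition transfer :: "('e \<Rightarrow> 'm list) set \<Rightarrow> 'e \<Rightarrow> 'e \<Rightarrow> 'm act list set \<Rightarrow> ('e \<Rightarrow> 'm list) set" where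
  "transfer R \<xi> \<eta> P = {C(\<xi> := drop (length (rcvs w)) (C \<xi>), \<eta> := C \<eta> @ snds w) | C w.
      C \<in> R \<and> w \<in> P \<and> prefix (rcvs w) (C \<xi>)}"

lemma fin_quot_level: "fin_quot X \<Longrightarrow> fin_quot {r. lq r X = D}"
proof -
  assume fX: "fin_quot X"
  have "range (\<lambda>u. lq u {r. lq r X = D}) \<subseteq> (\<lambda>Y. {r. lq r Y = D}) ` range (\<lambda>u. lq u X)"
  proof
    fix Z assume "Z \<in> range (\<lambda>u. lq u {r. lq r X = D})"
    then obtain u where "Z = lq u {r. lq r X = D}" by blast
    then have "Z = {r. lq r (lq u X) = D}" by (simp add: lq_def lq_append[symmetric])
    then show "Z \<in> (\<lambda>Y. {r. lq r Y = D}) ` range (\<lambda>u. lq u X)" by blast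
  qed
  moreover have "finite ((\<lambda>Y. {r. lq r Y = D}) ` range (\<lambda>u. lq u X))" using fX unfolding fin_quot_def by simp
  ultimately show ?thesis unfolding fin_quot_def by (rule finite_subset)
qed

lemma transfer_recog:
  assumes R: "recognizable M R" and ne: "\<xi> \<noteq> \<eta>" and P: "regular P"
    and Ps: "\<forall>w\<in>P. snds w \<in> lists (M \<eta>)"
  shows "recognizable M (transfer R \<xi> \<eta> P)"
proof -
  obtain F where F: "finite F" "\<forall>L\<in>F. \<forall>\<zeta>. L \<zeta> \<subseteq> lists (M \<zeta>) \<and> regular (L \<zeta>)"
    "R = (\<Union>L\<in>F. blk L)" using R unfolding recognizable_blk by blast
  obtain S where S: "finite S" "P \<subseteq> lists S" using regular_alph[OF P] by blast
  define WD where "WD L D = {w \<in> P. lq (rcvs w) (L \<xi>) = D}" for L D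
  define nb where "nb L D = L(\<xi> := D, \<eta> := lconc (L \<eta>) (snds ` WD L D))" for L D
  define F' where "F' = (\<lambda>(L, D). nb L D) ` (SIGMA L:F. range (\<lambda>r. lq r (L \<xi>)))"
  have fq: "fin_quot (L \<xi>)" if "L \<in> F" for L using F(2) that regular_fin_quot by blast
  have "finite (SIGMA L:F. range (\<lambda>r. lq r (L \<xi>)))" using F(1) fq
    by (intro finite_SigmaI) (auto simp: fin_quot_def)
  then have "finite F'" unfolding F'_def by (rule finite_imageI)
  have WDreg: "regular (WD L D)" if "L \<in> F" for L D
  proof -
    have "WD L D = P \<inter> {w \<in> lists S. rcvs w \<in> {r. lq r (L \<xi>) = D}}" using S(2) unfolding WD_def by auto
    moreover have "regular {w \<in> lists S. rcvs w \<in> {r. lq r (L \<xi>) = D}}"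
      by (rule fin_reg_inv_hom[OF S(1) fin_quot_level[OF fq[OF that]]])
    ultimately show ?thesis using regular_Int[OF P] by simp
  qed
  have F'E: "\<exists>L r. L \<in> F \<and> L' = nb L (lq r (L \<xi>))" if "L' \<in> F'" for L'
  proof -
    from that obtain p where p: "p \<in> (SIGMA L:F. range (\<lambda>r. lq r (L \<xi>)))" "L' = (\<lambda>(L, D). nb L D) p"
      unfolding F'_def by (rule imageE)
    obtain L D where "p = (L, D)" by (cases p)
    with p have "L \<in> F" "D \<in> range (\<lambda>r. lq r (L \<xi>))" "L' = nb L D" by auto
    then show ?thesis by blast
  qed
  have F'ok: "\<forall>L'\<in>F'. \<forall>\<zeta>. L' \<zeta> \<subseteq> lists (M \<zeta>) \<and> regular (L' \<zeta>)"
  proof (intro ballI allI)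
    fix L' \<zeta> assume "L' \<in> F'"
    from F'E[OF this] obtain L r where L: "L \<in> F" "L' = nb L (lq r (L \<xi>))" by blast
    show "L' \<zeta> \<subseteq> lists (M \<zeta>) \<and> regular (L' \<zeta>)"
    proof (cases "\<zeta> = \<xi>")
      case True
      have Lsub: "L \<xi> \<subseteq> lists (M \<xi>)" using F(2) L(1) by blast
      have "lq r (L \<xi>) \<subseteq> lists (M \<xi>)"
      proof
        fix v assume "v \<in> lq r (L \<xi>)"
        then have "r @ v \<in> L \<xi>" by (simp add: lq_def)
        then have "r @ v \<in> lists (M \<xi>)" by (rule subsetD[OF Lsub])
        then show "v \<in> lists (M \<xi>)" by simp
      qed
      moreover have "regular (lq r (L \<xi>))" using F(2) L(1) regular_lq by blast
      ultimately show ?thesis using True ne L(2) by (simp add: nb_def)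
    next
      case False
      show ?thesis
      proof (cases "\<zeta> = \<eta>")
        case True
        have "snds ` WD L (lq r (L \<xi>)) \<subseteq> lists (M \<eta>)" using Ps unfolding WD_def by blast
        moreover have "L \<eta> \<subseteq> lists (M \<eta>)" using F(2) L(1) by blast
        ultimately have "lconc (L \<eta>) (snds ` WD L (lq r (L \<xi>))) \<subseteq> lists (M \<eta>)"
          by (intro lconc_lists)
        moreover have "regular (lconc (L \<eta>) (snds ` WD L (lq r (L \<xi>))))"
          using F(2) L(1) WDreg[OF L(1)] by (intro reg_conc regular_hom_image) auto
        ultimately show ?thesis using True L(2) by (simp add: nb_def)
      next
        case False
        then show ?thesis using \<open>\<zeta> \<noteq> \<xi>\<close> F(2) L by (simp add: nb_def)
      qed
    qed
  qed
  have eq: "transfer R \<xi> \<eta> P = (\<Union>L'\<in>F'. blk L')"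
  proof (intro equalityI subsetI)
    fix C' assume "C' \<in> transfer R \<xi> \<eta> P"
    then obtain C w where Cw: "C' = C(\<xi> := drop (length (rcvs w)) (C \<xi>), \<eta> := C \<eta> @ snds w)"
      "C \<in> R" "w \<in> P" "prefix (rcvs w) (C \<xi>)" unfolding transfer_def by blast
    from Cw(2) F(3) obtain L where L: "L \<in> F" "C \<in> blk L" by blast
    define D where "D = lq (rcvs w) (L \<xi>)"
    have "(L, D) \<in> (SIGMA L:F. range (\<lambda>r. lq r (L \<xi>)))" unfolding D_def using L(1) by blast
    then have "(\<lambda>(L, D). nb L D) (L, D) \<in> F'" unfolding F'_def by (rule imageI)
    then have "nb L D \<in> F'" by simp
    moreover have "C' \<in> blk (nb L D)" unfolding blk_def
    proof (rule CollectI, rule allI)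
      fix \<zeta>
      show "C' \<zeta> \<in> nb L D \<zeta>"
      proof (cases "\<zeta> = \<eta>")
        case True
        have "snds w \<in> snds ` WD L D" using Cw(3) unfolding WD_def D_def by blast
        then have "C \<eta> @ snds w \<in> lconc (L \<eta>) (snds ` WD L D)" using L(2) unfolding blk_def
          by (intro lconcI) auto
        then show ?thesis using True Cw(1) by (simp add: nb_def)
      next
        case False
        show ?thesis
        proof (cases "\<zeta> = \<xi>")
          case True
          have "rcvs w @ drop (length (rcvs w)) (C \<xi>) = C \<xi>" using Cw(4)
            by (auto simp: prefix_def)
          moreover have "C \<xi> \<in> L \<xi>" using L(2) unfolding blk_def by blast
          ultimately have "drop (length (rcvs w)) (C \<xi>) \<in> D" unfolding D_def lq_def by simp
          then show ?thesis using True ne Cw(1) by (simp add: nb_def)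
        next
          case False
          then show ?thesis using \<open>\<zeta> \<noteq> \<eta>\<close> Cw(1) L(2) by (simp add: nb_def blk_def)
        qed
      qed
    qed
    ultimately show "C' \<in> (\<Union>L'\<in>F'. blk L')" by blast
  next
    fix C' assume "C' \<in> (\<Union>L'\<in>F'. blk L')"
    then obtain L' where L'F: "L' \<in> F'" and CL': "C' \<in> blk L'" by blast
    from F'E[OF L'F] obtain L r where L1: "L \<in> F" and L'eq: "L' = nb L (lq r (L \<xi>))" by blast
    from L1 CL' L'eq have L: "L \<in> F" "C' \<in> blk (nb L (lq r (L \<xi>)))" by simp_all
    define D where "D = lq r (L \<xi>)"
    have Call: "C' \<zeta> \<in> nb L D \<zeta>" for \<zeta> using L(2) unfolding blk_def D_def by blast
    have "C' \<eta> \<in> lconc (L \<eta>) (snds ` WD L D)" using Call[of \<eta>] by (simp add: nb_def)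
    then obtain a w where aw: "C' \<eta> = a @ snds w" "a \<in> L \<eta>" "w \<in> WD L D" by (auto elim!: lconcE)
    have Cx: "C' \<xi> \<in> D" using Call[of \<xi>] ne by (simp add: nb_def)
    have wD: "w \<in> P" "lq (rcvs w) (L \<xi>) = D" using aw(3) unfolding WD_def by auto
    define C where "C = C'(\<xi> := rcvs w @ C' \<xi>, \<eta> := a)"
    have "C \<in> blk L" unfolding blk_def
    proof (rule CollectI, rule allI)
      fix \<zeta>
      show "C \<zeta> \<in> L \<zeta>"
      proof (cases "\<zeta> = \<eta>")
        case True then show ?thesis using aw(2) by (simp add: C_def)
      next
        case False
        show ?thesis
        proof (cases "\<zeta> = \<xi>")
          case True
          have "C' \<xi> \<in> lq (rcvs w) (L \<xi>)" using Cx wD(2) by simp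
          then have "rcvs w @ C' \<xi> \<in> L \<xi>" by (simp add: lq_def)
          then show ?thesis using True ne by (simp add: C_def)
        next
          case False
          have "C' \<zeta> \<in> nb L (lq r (L \<xi>)) \<zeta>" using L(2) unfolding blk_def by blast
          then show ?thesis using False \<open>\<zeta> \<noteq> \<eta>\<close> by (simp add: C_def nb_def)
        qed
      qed
    qed
    then have "C \<in> R" using F(3) L(1) by blast
    moreover have "prefix (rcvs w) (C \<xi>)" using ne by (simp add: C_def)
    moreover have "C' = C(\<xi> := drop (length (rcvs w)) (C \<xi>), \<eta> := C \<eta> @ snds w)"
      using ne aw(1) by (auto simp: C_def fun_eq_iff)
    ultimately show "C' \<in> transfer R \<xi> \<eta> P" unfolding transfer_def using wD(1) by blast
  qed
  show ?thesis unfolding recognizable_blk using \<open>finite F'\<close> F'ok eq by blast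
qed

lemma hom_prefix: "prefix u v \<Longrightarrow> prefix (hom g u) (hom g v)"
  by (auto simp: prefix_def)

fun src :: "'m list \<Rightarrow> (nat \<Rightarrow> 'm act list) \<Rightarrow> nat \<Rightarrow> 'm list" where
  "src y \<pi> 0 = y"
| "src y \<pi> (Suc k) = snds (\<pi> k)"

locale cyc =
  fixes tail head :: "'e::finite \<Rightarrow> 'n::finite"
    and M :: "'e \<Rightarrow> 'm set" and K :: "'n \<Rightarrow> 's set"
    and T :: "'n \<Rightarrow> ('s \<times> 'm act \<times> 's) set" and h :: "'n \<Rightarrow> 's" and \<beta> :: 'e
  assumes prot: "cfsm_protocol tail head M K T h"
    and cycg: "cyclic_graph tail head"
begin

abbreviation step where "step \<equiv> cfsm_step tail head M T"

definition reach :: "('n \<Rightarrow> 's) \<times> ('e \<Rightarrow> 'm list) \<Rightarrow> bool" where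
  "reach X \<longleftrightarrow> step\<^sup>*\<^sup>* (h, \<lambda>\<xi>. []) X"

lemma reach_step: "reach X \<Longrightarrow> step X Y \<Longrightarrow> reach Y"
  unfolding reach_def by (rule rtranclp.rtrancl_into_rtrancl)

lemma reach_steps: "reach X \<Longrightarrow> step\<^sup>*\<^sup>* X Y \<Longrightarrow> reach Y"
  unfolding reach_def by (rule rtranclp_trans)

lemma bij_tail: "bij tail" and bij_head: "bij head"
  using cycg by (simp_all add: cyclic_graph_def)

lemma tail_eq: "tail \<xi> = j \<longleftrightarrow> \<xi> = inv tail j"
  using bij_tail by (metis bij_inv_eq_iff)

lemma head_eq: "head \<xi> = j \<longleftrightarrow> \<xi> = inv head j"
  using bij_head by (metis bij_inv_eq_iff)

lemma head_inv[simp]: "head (inv head j) = j" using bij_head bij_is_surj surj_f_inv_f by metis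
lemma tail_inv[simp]: "tail (inv tail j) = j" using bij_tail bij_is_surj surj_f_inv_f by metis
lemma inv_head[simp]: "inv head (head \<xi>) = \<xi>" using bij_head bij_is_inj inv_f_f by metis
lemma inv_tail[simp]: "inv tail (tail \<xi>) = \<xi>" using bij_tail bij_is_inj inv_f_f by metis

definition succ :: "'n \<Rightarrow> 'n" where "succ j = head (inv tail j)"
definition nd :: "nat \<Rightarrow> 'n" where "nd k = (succ ^^ k) (head \<beta>)"
definition ch :: "nat \<Rightarrow> 'e" where "ch k = inv head (nd k)"
definition N :: nat where "N = card (range head)"

lemma N_card: "N = card (UNIV :: 'n set)"
  using bij_head bij_is_surj by (metis N_def)

lemma nd_0: "nd 0 = head \<beta>" by (simp add: nd_def)
lemma nd_Suc: "nd (Suc k) = succ (nd k)" by (simp add: nd_def)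

lemma succ_inj: "succ i = succ j \<Longrightarrow> i = j"
  unfolding succ_def by (metis inv_head tail_inv)

lemma nd_cancel: "nd (i + d) = nd i \<Longrightarrow> nd d = nd 0"
proof (induction i)
  case 0 then show ?case by simp
next
  case (Suc i)
  then have "succ (nd (i + d)) = succ (nd i)" by (simp add: nd_Suc)
  then show ?case using Suc.IH succ_inj by blast
qed

lemma nd_all: "\<exists>k. nd k = j"
proof -
  have "(head \<beta>, j) \<in> {(tail \<xi>, head \<xi>) | \<xi>. True}\<^sup>*" using cycg by (simp add: cyclic_graph_def)
  then show ?thesis
  proof (induction rule: rtrancl_induct)
    case base then show ?case using nd_0 by blast
  next
    case (step y z)
    then obtain k \<xi> where "nd k = y" "y = tail \<xi>" "z = head \<xi>" by blast
    then have "nd (Suc k) = z" by (simp add: nd_Suc succ_def)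
    then show ?case by blast
  qed
qed

lemma ex_period: "\<exists>p. 0 < p \<and> nd p = nd 0"
proof -
  have "\<not> inj_on nd {..N}"
  proof
    assume "inj_on nd {..N}"
    then have "card (nd ` {..N}) = Suc N" by (simp add: card_image)
    moreover have "card (nd ` {..N}) \<le> N" unfolding N_card by (rule card_mono) auto
    ultimately show False by simp
  qed
  then obtain i j where "i \<noteq> j" "nd i = nd j" unfolding inj_on_def by blast
  then show ?thesis
  proof (cases "i < j")
    case True
    then have "nd (i + (j - i)) = nd i" using \<open>nd i = nd j\<close> by simp
    then show ?thesis using nd_cancel True by (metis zero_less_diff)
  next
    case False
    then have "nd (j + (i - j)) = nd j" using \<open>nd i = nd j\<close> \<open>i \<noteq> j\<close> by simp
    then show ?thesis using nd_cancel False \<open>i \<noteq> j\<close> by (metis linorder_neqE_nat zero_less_diff)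
  qed
qed

definition per where "per = (LEAST p. 0 < p \<and> nd p = nd 0)"

lemma per: "0 < per" "nd per = nd 0"
  using LeastI_ex[OF ex_period] unfolding per_def by auto

lemma per_min: "0 < q \<Longrightarrow> q < per \<Longrightarrow> nd q \<noteq> nd 0"
  unfolding per_def using not_less_Least by blast

lemma nd_plus_per: "nd (k + per) = nd k"
  by (induction k) (simp_all add: per nd_Suc)

lemma nd_mult_per: "nd (k + q * per) = nd k"
proof (induction q)
  case 0 then show ?case by simp
next
  case (Suc q)
  have "k + Suc q * per = (k + q * per) + per" by simp
  then show ?case using Suc nd_plus_per by metis
qed

lemma nd_mod_per: "nd k = nd (k mod per)"
  using nd_mult_per[of "k mod per" "k div per"] by simp

lemma nd_inj_per: "i < per \<Longrightarrow> j < per \<Longrightarrow> nd i = nd j \<Longrightarrow> i = j"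
proof (rule ccontr)
  assume a: "i < per" "j < per" "nd i = nd j" "i \<noteq> j"
  show False
  proof (cases "i < j")
    case True
    then have "nd (i + (j - i)) = nd i" using a by simp
    then have "nd (j - i) = nd 0" by (rule nd_cancel)
    then show False using per_min[of "j - i"] True a by simp
  next
    case False
    then have "nd (j + (i - j)) = nd j" using a by simp
    then have "nd (i - j) = nd 0" by (rule nd_cancel)
    then show False using per_min[of "i - j"] False a by simp
  qed
qed

lemma per_N: "per = N"
proof -
  have "nd ` {..<per} = UNIV"
  proof (intro equalityI subsetI)
    fix j :: 'n
    obtain k where "nd k = j" using nd_all by blast
    then have "nd (k mod per) = j" using nd_mod_per by simp
    moreover have "k mod per < per" using per by simp
    ultimately show "j \<in> nd ` {..<per}" by blast
  qed simp
  moreover have "inj_on nd {..<per}" using nd_inj_per by (auto simp: inj_on_def)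
  ultimately show ?thesis unfolding N_card using card_image by fastforce
qed

lemma N_pos: "0 < N" using per per_N by simp
lemma nd_N: "nd N = nd 0" using per per_N by simp
lemma nd_inj: "i < N \<Longrightarrow> j < N \<Longrightarrow> nd i = nd j \<longleftrightarrow> i = j"
  using nd_inj_per[of i j] per_N by auto
lemma nd_surj: "\<exists>k<N. nd k = j"
proof -
  obtain k where "nd k = j" using nd_all by blast
  then show ?thesis using nd_mod_per per per_N by (metis mod_less_divisor)
qed

definition idx :: "'n \<Rightarrow> nat" where "idx j = (THE k. k < N \<and> nd k = j)"

lemma idx: "idx j < N" "nd (idx j) = j"
proof -
  obtain k where k: "k < N" "nd k = j" using nd_surj by blast
  have "idx j = k" unfolding idx_def using k nd_inj by blast
  then show "idx j < N" "nd (idx j) = j" using k by auto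
qed

lemma idx_nd[simp]: "k < N \<Longrightarrow> idx (nd k) = k"
  using idx nd_inj by blast

lemma head_ch[simp]: "head (ch k) = nd k" by (simp add: ch_def)
lemma ch_0: "ch 0 = \<beta>" by (simp add: ch_def nd_0)
lemma ch_inj: "i < N \<Longrightarrow> j < N \<Longrightarrow> ch i = ch j \<longleftrightarrow> i = j"
  by (metis head_ch nd_inj)
lemma ch_N: "ch N = \<beta>" using nd_N ch_0 by (simp add: ch_def)

definition eidx :: "'e \<Rightarrow> nat" where "eidx \<xi> = idx (head \<xi>)"
lemma eidx: "eidx \<xi> < N" "ch (eidx \<xi>) = \<xi>"
  by (simp_all add: eidx_def idx ch_def)
lemma eidx_ch[simp]: "k < N \<Longrightarrow> eidx (ch k) = k"
  by (simp add: eidx_def)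

lemma out_edge: "inv tail (nd k) = ch (Suc k)"
  by (simp add: ch_def nd_Suc succ_def)

lemma in_edge: "inv head (nd k) = ch k" by (simp add: ch_def)

lemma beta_idx: "eidx \<beta> = 0"
  using eidx_ch[of 0] ch_0 N_pos by simp

lemma M_disj: "b \<in> M \<xi> \<Longrightarrow> b \<in> M \<eta> \<Longrightarrow> \<xi> = \<eta>"
  using prot unfolding cfsm_protocol_def by blast

lemma T_snd: "(p, Snd b, q) \<in> T j \<Longrightarrow> b \<in> M (inv tail j)"
proof -
  assume "(p, Snd b, q) \<in> T j"
  then obtain \<xi> where "b \<in> M \<xi>" "tail \<xi> = j" using prot unfolding cfsm_protocol_def by fastforce
  then show ?thesis by (metis inv_tail)
qed

lemma T_rcv: "(p, Rcv b, q) \<in> T j \<Longrightarrow> b \<in> M (inv head j)"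
proof -
  assume "(p, Rcv b, q) \<in> T j"
  then obtain \<xi> where "b \<in> M \<xi>" "head \<xi> = j" using prot unfolding cfsm_protocol_def by fastforce
  then show ?thesis by (metis inv_head)
qed

definition Lab :: "'m act set" where "Lab = Snd ` (\<Union>\<xi>. M \<xi>) \<union> Rcv ` (\<Union>\<xi>. M \<xi>)"

lemma Lab_finite: "finite Lab"
  using prot unfolding Lab_def cfsm_protocol_def by auto

lemma K_finite: "finite (K j)" and h_K: "h j \<in> K j"
  using prot unfolding cfsm_protocol_def by auto

lemma T_sub: "T j \<subseteq> K j \<times> Lab \<times> K j"
proof
  fix x assume "x \<in> T j"
  then obtain p a q where x: "x = (p, a, q)" "(p, a, q) \<in> T j" by (cases x) auto
  then have pq: "p \<in> K j" "q \<in> K j" using prot unfolding cfsm_protocol_def by blast+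
  have "a \<in> Lab"
  proof (cases a)
    case (Snd b)
    then have "b \<in> M (inv tail j)" using T_snd x(2) by blast
    then show ?thesis using Snd unfolding Lab_def by blast
  next
    case (Rcv b)
    then have "b \<in> M (inv head j)" using T_rcv x(2) by blast
    then show ?thesis using Rcv unfolding Lab_def by blast
  qed
  then show "x \<in> K j \<times> Lab \<times> K j" using x pq by simp
qed

lemma T_K: "(p, a, q) \<in> T j \<Longrightarrow> q \<in> K j"
  using T_sub[of j] by blast

lemma chan_upd: "C \<in> chan_monoid M \<Longrightarrow> x \<in> lists (M \<xi>) \<Longrightarrow> C(\<xi> := x) \<in> chan_monoid M"
  unfolding chan_monoid_def by simp

lemma chan_get: "C \<in> chan_monoid M \<Longrightarrow> C \<xi> \<in> lists (M \<xi>)"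
  unfolding chan_monoid_def by simp

lemma step_inv: "step X Y \<Longrightarrow> (\<forall>j. fst X j \<in> K j) \<and> snd X \<in> chan_monoid M \<Longrightarrow>
   (\<forall>j. fst Y j \<in> K j) \<and> snd Y \<in> chan_monoid M"
proof (induction rule: cfsm_step.induct)
  case (send S i b q \<beta> C)
  then have "q \<in> K i" by (intro T_K)
  then have 1: "\<forall>j. (S(i := q)) j \<in> K j" using send.prems by simp
  have "C \<beta> \<in> lists (M \<beta>)" using send.prems chan_get by simp
  then have "C \<beta> @ [b] \<in> lists (M \<beta>)" using send.hyps(2) by simp
  then have 2: "C(\<beta> := C \<beta> @ [b]) \<in> chan_monoid M" using send.prems chan_upd by simp
  show ?case unfolding fst_conv snd_conv using 1 2 by blast
next
  case (recv S i b q \<beta> C w)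
  then have "q \<in> K i" by (intro T_K)
  then have 1: "\<forall>j. (S(i := q)) j \<in> K j" using recv.prems by simp
  have "C \<beta> \<in> lists (M \<beta>)" using recv.prems chan_get by simp
  then have "w \<in> lists (M \<beta>)" using recv.hyps(4) by simp
  then have 2: "C(\<beta> := w) \<in> chan_monoid M" using recv.prems chan_upd by simp
  show ?case unfolding fst_conv snd_conv using 1 2 by blast
qed

lemma reach_inv_gen: "reach X \<Longrightarrow> (\<forall>j. fst X j \<in> K j) \<and> snd X \<in> chan_monoid M"
proof -
  assume "reach X"
  then have "step\<^sup>*\<^sup>* (h, \<lambda>\<xi>. []) X" by (simp add: reach_def)
  then show ?thesis
  proof (induction rule: rtranclp_induct)
    case base then show ?case using h_K by (simp add: chan_monoid_def)
  next
    case (step y z)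
    then show ?case using step_inv[of y z] by simp
  qed
qed

lemma reach_inv: "reach (S, C) \<Longrightarrow> (\<forall>j. S j \<in> K j) \<and> C \<in> chan_monoid M"
  using reach_inv_gen[of "(S, C)"] by simp

lemma lpath_snds: "lpath (T j) p w q \<Longrightarrow> snds w \<in> lists (M (inv tail j))"
proof (induction rule: lpath.induct)
  case (lp_nil p) then show ?case by simp
next
  case (lp_cons p a r w q)
  then show ?case using T_snd by (cases a) auto
qed

lemma exec_path:
  assumes "lpath (T j) p w q" and ne: "inv head j \<noteq> inv tail j"
  shows "S j = p \<Longrightarrow> C (inv head j) = rcvs w @ rest \<Longrightarrow>
    step\<^sup>*\<^sup>* (S, C) (S(j := q), C(inv head j := rest, inv tail j := C (inv tail j) @ snds w))"
  using assms(1)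
proof (induction arbitrary: S C rule: lpath.induct)
  case (lp_nil p)
  have e: "(S(j := p), C(inv head j := rest, inv tail j := C (inv tail j) @ snds [])) = (S, C)"
    using lp_nil by (auto simp: fun_eq_iff)
  show ?case unfolding e by (rule rtranclp.rtrancl_refl)
next
  case (lp_cons p a r w q)
  show ?case
  proof (cases a)
    case (Snd b)
    have st: "step (S, C) (S(j := r), C(inv tail j := C (inv tail j) @ [b]))"
      using lp_cons Snd T_snd by (intro cfsm_step.send) auto
    have "step\<^sup>*\<^sup>* (S(j := r), C(inv tail j := C (inv tail j) @ [b]))
       ((S(j := r))(j := q), (C(inv tail j := C (inv tail j) @ [b]))(inv head j := rest,
           inv tail j := (C(inv tail j := C (inv tail j) @ [b])) (inv tail j) @ snds w))"
      using lp_cons Snd ne by (intro lp_cons.IH) auto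
    moreover have "(S(j := r))(j := q) = S(j := q)" by simp
    moreover have "(C(inv tail j := C (inv tail j) @ [b]))(inv head j := rest,
           inv tail j := (C(inv tail j := C (inv tail j) @ [b])) (inv tail j) @ snds w)
        = C(inv head j := rest, inv tail j := C (inv tail j) @ snds (a # w))"
      using ne Snd by (auto simp: fun_eq_iff)
    ultimately show ?thesis using st by (metis converse_rtranclp_into_rtranclp)
  next
    case (Rcv b)
    have st: "step (S, C) (S(j := r), C(inv head j := rcvs w @ rest))"
      using lp_cons Rcv T_rcv by (intro cfsm_step.recv) auto
    have "step\<^sup>*\<^sup>* (S(j := r), C(inv head j := rcvs w @ rest))
       ((S(j := r))(j := q), (C(inv head j := rcvs w @ rest))(inv head j := rest,
           inv tail j := (C(inv head j := rcvs w @ rest)) (inv tail j) @ snds w))"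
      using lp_cons Rcv ne by (intro lp_cons.IH) auto
    moreover have "(S(j := r))(j := q) = S(j := q)" by simp
    moreover have "(C(inv head j := rcvs w @ rest))(inv head j := rest,
           inv tail j := (C(inv head j := rcvs w @ rest)) (inv tail j) @ snds w)
        = C(inv head j := rest, inv tail j := C (inv tail j) @ snds (a # w))"
      using ne Rcv by (auto simp: fun_eq_iff)
    ultimately show ?thesis using st by (metis converse_rtranclp_into_rtranclp)
  qed
qed

end

fun pfx :: "'m list \<Rightarrow> 'm act list \<Rightarrow> 'm act list" where
  "pfx [] \<pi> = []"
| "pfx (b # r) [] = []"
| "pfx (b # r) (Rcv c # \<pi>) = Rcv c # pfx (b # r) \<pi>"
| "pfx (b # r) (Snd c # \<pi>) = Snd c # pfx r \<pi>"

lemma pfx_prop: "prefix r (snds \<pi>) \<Longrightarrow> prefix (pfx r \<pi>) \<pi> \<and> snds (pfx r \<pi>) = r"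
proof (induction r \<pi> rule: pfx.induct)
  case (1 \<pi>) then show ?case by simp
next
  case (2 b r) then show ?case by simp
next
  case (3 b r c \<pi>) then show ?case by simp
next
  case (4 b r c \<pi>) then show ?case by simp
qed

primrec Aseq :: "nat \<Rightarrow> (nat \<Rightarrow> 'm act list) \<Rightarrow> 'm \<Rightarrow> nat \<Rightarrow> 'm act list" where
  "Aseq l \<pi> b 0 = pfx [b] (\<pi> l)"
| "Aseq l \<pi> b (Suc d) = pfx (rcvs (Aseq l \<pi> b d)) (\<pi> (l - Suc d))"

context cyc
begin

definition base :: "'m list \<Rightarrow> 'e \<Rightarrow> 'm list" where "base y = (\<lambda>\<xi>. [])(\<beta> := y)"

definition Dec where
  "Dec S' y \<pi> S C \<longleftrightarrow> reach (S', base y) \<and> (\<forall>k. N - 1 \<le> k \<longrightarrow> \<pi> k = []) \<and>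
     (\<forall>k < N - 1. lpath (T (nd k)) (S' (nd k)) (\<pi> k) (S (nd k))) \<and> S' (nd (N - 1)) = S (nd (N - 1)) \<and>
     (\<forall>k < N. prefix (rcvs (\<pi> k)) (src y \<pi> k)) \<and>
     (\<forall>k < N. C (ch k) = drop (length (rcvs (\<pi> k))) (src y \<pi> k))"

lemma DecD:
  assumes "Dec S' y \<pi> S C"
  shows "reach (S', base y)" "\<And>k. N - 1 \<le> k \<Longrightarrow> \<pi> k = []"
    "\<And>k. k < N - 1 \<Longrightarrow> lpath (T (nd k)) (S' (nd k)) (\<pi> k) (S (nd k))"
    "S' (nd (N - 1)) = S (nd (N - 1))"
    "\<And>k. k < N \<Longrightarrow> prefix (rcvs (\<pi> k)) (src y \<pi> k)"
    "\<And>k. k < N \<Longrightarrow> C (ch k) = drop (length (rcvs (\<pi> k))) (src y \<pi> k)"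
  using assms unfolding Dec_def by blast+

lemma DecI:
  assumes "reach (S', base y)" "\<And>k. N - 1 \<le> k \<Longrightarrow> \<pi> k = []"
    "\<And>k. k < N - 1 \<Longrightarrow> lpath (T (nd k)) (S' (nd k)) (\<pi> k) (S (nd k))"
    "S' (nd (N - 1)) = S (nd (N - 1))"
    "\<And>k. k < N \<Longrightarrow> prefix (rcvs (\<pi> k)) (src y \<pi> k)"
    "\<And>k. k < N \<Longrightarrow> C (ch k) = drop (length (rcvs (\<pi> k))) (src y \<pi> k)"
  shows "Dec S' y \<pi> S C"
  using assms unfolding Dec_def by blast

definition PL where "PL S' S k = {w. lpath (T (nd k)) (S' (nd k)) w (S (nd k))}"

primrec Rk where
  "Rk S' S 0 = {base y | y. reach (S', base y)}"
| "Rk S' S (Suc k) = transfer (Rk S' S k) (ch k) (ch (Suc k)) (PL S' S k)"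

lemma eidx_0: "eidx \<xi> = 0 \<longleftrightarrow> \<xi> = \<beta>"
  using eidx(2)[of \<xi>] ch_0 beta_idx by metis

lemma ch_cases: obtains i where "i < N" "\<xi> = ch i"
  using eidx by metis

lemma nd_ne: "i < N \<Longrightarrow> j < N \<Longrightarrow> i \<noteq> j \<Longrightarrow> nd i \<noteq> nd j"
  using nd_inj by blast

lemma ch_ne: "i < N \<Longrightarrow> j < N \<Longrightarrow> i \<noteq> j \<Longrightarrow> ch i \<noteq> ch j"
  using ch_inj by blast

lemma Dec_Rk: assumes D: "Dec S' y \<pi> S C" shows "C \<in> Rk S' S (N - 1)"
proof -
  define Cp where "Cp k = (\<lambda>\<xi>. if eidx \<xi> < k then drop (length (rcvs (\<pi> (eidx \<xi>)))) (src y \<pi> (eidx \<xi>))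
      else if eidx \<xi> = k then src y \<pi> k else [])" for k
  have "k \<le> N - 1 \<Longrightarrow> Cp k \<in> Rk S' S k" for k
  proof (induction k)
    case 0
    have "Cp 0 = base y" unfolding Cp_def base_def using eidx_0 by (auto simp: fun_eq_iff)
    then show ?case using DecD(1)[OF D] by auto
  next
    case (Suc k)
    then have k: "k < N - 1" "Suc k < N" by auto
    have IH: "Cp k \<in> Rk S' S k" using Suc by simp
    have w: "\<pi> k \<in> PL S' S k" using DecD(3)[OF D k(1)] by (simp add: PL_def)
    have c: "Cp k (ch k) = src y \<pi> k" using k by (simp add: Cp_def)
    have pre: "prefix (rcvs (\<pi> k)) (Cp k (ch k))" using c DecD(5)[OF D] k by simp
    have eq: "Cp (Suc k) = (Cp k)(ch k := drop (length (rcvs (\<pi> k))) (Cp k (ch k)),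
        ch (Suc k) := Cp k (ch (Suc k)) @ snds (\<pi> k))"
    proof
      fix \<xi>
      obtain i where i: "i < N" "\<xi> = ch i" by (rule ch_cases)
      show "Cp (Suc k) \<xi> = ((Cp k)(ch k := drop (length (rcvs (\<pi> k))) (Cp k (ch k)),
        ch (Suc k) := Cp k (ch (Suc k)) @ snds (\<pi> k))) \<xi>"
      proof (cases "i = Suc k")
        case True then show ?thesis using i k by (simp add: Cp_def)
      next
        case False
        have ne: "ch i \<noteq> ch (Suc k)" using False i k ch_ne by blast
        show ?thesis
        proof (cases "i = k")
          case True then show ?thesis using i k ne by (simp add: Cp_def)
        next
          case False
          have "ch i \<noteq> ch k" using False i k ch_ne by simp
          then show ?thesis using i k ne False \<open>i \<noteq> Suc k\<close> by (simp add: Cp_def)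
        qed
      qed
    qed
    show ?case unfolding Rk.simps transfer_def eq using IH w pre by blast
  qed
  then have "Cp (N - 1) \<in> Rk S' S (N - 1)" by simp
  moreover have "Cp (N - 1) = C"
  proof
    fix \<xi>
    obtain i where i: "i < N" "\<xi> = ch i" by (rule ch_cases)
    show "Cp (N - 1) \<xi> = C \<xi>"
    proof (cases "i < N - 1")
      case True then show ?thesis using i DecD(6)[OF D] by (simp add: Cp_def)
    next
      case False
      then have "i = N - 1" using i by simp
      then show ?thesis using i DecD(6)[OF D i(1)] DecD(2)[OF D, of i] by (simp add: Cp_def)
    qed
  qed
  ultimately show ?thesis by simp
qed

lemma Rk_reach: "C \<in> Rk S' S k \<Longrightarrow> k \<le> N - 1 \<Longrightarrow> reach ((\<lambda>j. if idx j < k then S j else S' j), C)"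
proof (induction k arbitrary: C)
  case 0
  then obtain y where "C = base y" "reach (S', base y)" by auto
  moreover have "(\<lambda>j. if idx j < 0 then S j else S' j) = S'" by simp
  ultimately show ?case by simp
next
  case (Suc k)
  from Suc.prems(1) obtain C0 w where C: "C = C0(ch k := drop (length (rcvs w)) (C0 (ch k)),
      ch (Suc k) := C0 (ch (Suc k)) @ snds w)" "C0 \<in> Rk S' S k" "w \<in> PL S' S k" "prefix (rcvs w) (C0 (ch k))"
    unfolding Rk.simps transfer_def by blast
  have k: "k < N - 1" "Suc k < N" "k < N" using Suc.prems by auto
  define Sk where "Sk = (\<lambda>j. if idx j < k then S j else S' j)"
  have IH: "reach (Sk, C0)" using Suc.IH[OF C(2)] k unfolding Sk_def by simp
  have lp: "lpath (T (nd k)) (Sk (nd k)) w (S (nd k))" using C(3) k by (simp add: PL_def Sk_def)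
  have ne: "inv head (nd k) \<noteq> inv tail (nd k)" unfolding in_edge out_edge using ch_ne k by simp
  have c0: "C0 (inv head (nd k)) = rcvs w @ drop (length (rcvs w)) (C0 (ch k))"
    using C(4) unfolding in_edge by (auto simp: prefix_def)
  have "step\<^sup>*\<^sup>* (Sk, C0) (Sk(nd k := S (nd k)), C0(inv head (nd k) := drop (length (rcvs w)) (C0 (ch k)),
      inv tail (nd k) := C0 (inv tail (nd k)) @ snds w))"
    using exec_path[OF lp ne, of Sk C0] c0 by simp
  moreover have "Sk(nd k := S (nd k)) = (\<lambda>j. if idx j < Suc k then S j else S' j)"
  proof
    fix j
    show "(Sk(nd k := S (nd k))) j = (if idx j < Suc k then S j else S' j)"
    proof (cases "j = nd k")
      case True then show ?thesis using k by simp
    next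
      case False
      then have "idx j \<noteq> k" using idx(2)[of j] by auto
      then show ?thesis using False by (auto simp: Sk_def)
    qed
  qed
  ultimately have "step\<^sup>*\<^sup>* (Sk, C0) ((\<lambda>j. if idx j < Suc k then S j else S' j), C)"
    unfolding in_edge out_edge C(1) by simp
  then show ?case using IH reach_steps by blast
qed

lemma Rk_reach_full: "C \<in> Rk S' S (N - 1) \<Longrightarrow> S' (nd (N - 1)) = S (nd (N - 1)) \<Longrightarrow> reach (S, C)"
proof -
  assume C: "C \<in> Rk S' S (N - 1)" and e: "S' (nd (N - 1)) = S (nd (N - 1))"
  have "(\<lambda>j. if idx j < N - 1 then S j else S' j) = S"
  proof
    fix j
    show "(if idx j < N - 1 then S j else S' j) = S j"
    proof (cases "idx j < N - 1")
      case False
      then have "idx j = N - 1" using idx(1)[of j] by simp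
      then have "j = nd (N - 1)" using idx(2)[of j] by simp
      then show ?thesis using e False by simp
    qed simp
  qed
  then show ?thesis using Rk_reach[OF C] by simp
qed

lemma Dec_reach: "Dec S' y \<pi> S C \<Longrightarrow> reach (S, C)"
  using Dec_Rk Rk_reach_full DecD(4) by blast

end

context cyc
begin

lemma Dec_init: "Dec h [] (\<lambda>k. []) h (\<lambda>\<xi>. [])"
proof (rule DecI)
  have "base [] = (\<lambda>\<xi>. [])" by (auto simp: base_def)
  then show "reach (h, base [])" by (simp add: reach_def)
next
  fix k show "lpath (T (nd k)) (h (nd k)) [] (h (nd k))" by (rule lp_nil)
next
  fix k :: nat assume "k < N"
  show "([] :: 'm list) = drop (length (rcvs [])) (src [] (\<lambda>k. []) k)" by (cases k) auto
qed auto

lemma Dec_send_inner: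
  assumes D: "Dec S' y \<pi> S C" and k: "k < N - 1" and t: "(S (nd k), Snd b, q) \<in> T (nd k)"
  shows "Dec S' y (\<pi>(k := \<pi> k @ [Snd b])) (S(nd k := q)) (C(ch (Suc k) := C (ch (Suc k)) @ [b]))"
proof -
  let ?\<pi> = "\<pi>(k := \<pi> k @ [Snd b])"
  have rc: "rcvs (?\<pi> j) = rcvs (\<pi> j)" for j by (cases "j = k") auto
  have srcS: "src y ?\<pi> (Suc k) = src y \<pi> (Suc k) @ [b]" by simp
  have srcO: "j \<noteq> Suc k \<Longrightarrow> src y ?\<pi> j = src y \<pi> j" for j by (cases j) auto
  have ndk: "j < N \<Longrightarrow> j \<noteq> k \<Longrightarrow> nd j \<noteq> nd k" for j using nd_ne k by simp
  show ?thesis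
  proof (rule DecI)
    show "reach (S', base y)" by (rule DecD(1)[OF D])
  next
    fix j assume "N - 1 \<le> j" then show "?\<pi> j = []" using DecD(2)[OF D] k by auto
  next
    fix j assume j: "j < N - 1"
    show "lpath (T (nd j)) (S' (nd j)) (?\<pi> j) ((S(nd k := q)) (nd j))"
    proof (cases "j = k")
      case True then show ?thesis using DecD(3)[OF D j] t by (auto intro: lpath_snoc)
    next
      case False then show ?thesis using DecD(3)[OF D j] j ndk by auto
    qed
  next
    show "S' (nd (N - 1)) = (S(nd k := q)) (nd (N - 1))" using DecD(4)[OF D] ndk[of "N - 1"] k by auto
  next
    fix j assume j: "j < N"
    show "prefix (rcvs (?\<pi> j)) (src y ?\<pi> j)"
    proof (cases "j = Suc k")
      case True then show ?thesis using DecD(5)[OF D j] rc srcS by simp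
    next
      case False then show ?thesis using DecD(5)[OF D j] rc srcO by simp
    qed
  next
    fix j assume j: "j < N"
    show "(C(ch (Suc k) := C (ch (Suc k)) @ [b])) (ch j) = drop (length (rcvs (?\<pi> j))) (src y ?\<pi> j)"
    proof (cases "j = Suc k")
      case True
      have "C (ch j) = drop (length (rcvs (\<pi> j))) (src y \<pi> j)" using DecD(6)[OF D j] by blast
      moreover have "length (rcvs (\<pi> j)) \<le> length (src y \<pi> j)" using DecD(5)[OF D j] prefix_length_le by blast
      ultimately show ?thesis using True rc srcS by simp
    next
      case False
      then have "ch j \<noteq> ch (Suc k)" using ch_ne j k by simp
      then show ?thesis using DecD(6)[OF D j] rc srcO False by simp
    qed
  qed
qed

lemma Dec_send_last:
  assumes D: "Dec S' y \<pi> S C" and t: "(S (nd (N - 1)), Snd b, q) \<in> T (nd (N - 1))"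
  shows "Dec (S'(nd (N - 1) := q)) (y @ [b]) \<pi> (S(nd (N - 1) := q)) (C(\<beta> := C \<beta> @ [b]))"
proof -
  have oe: "inv tail (nd (N - 1)) = \<beta>" using out_edge[of "N - 1"] N_pos ch_N by simp
  have bM: "b \<in> M \<beta>" using T_snd[OF t] oe by simp
  have tb: "tail \<beta> = nd (N - 1)" using oe tail_inv by metis
  have ndk: "j < N - 1 \<Longrightarrow> nd j \<noteq> nd (N - 1)" for j using nd_ne N_pos by simp
  have chb: "0 < j \<Longrightarrow> j < N \<Longrightarrow> ch j \<noteq> \<beta>" for j using ch_ne[of j 0] N_pos ch_0 by simp
  show ?thesis
  proof (rule DecI)
    have st: "step (S', base y) (S'(nd (N - 1) := q), (base y)(\<beta> := base y \<beta> @ [b]))"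
      using t DecD(4)[OF D] bM tb by (intro cfsm_step.send) auto
    have "(base y)(\<beta> := base y \<beta> @ [b]) = base (y @ [b])" by (simp add: base_def)
    then show "reach (S'(nd (N - 1) := q), base (y @ [b]))" using reach_step[OF DecD(1)[OF D] st] by simp
  next
    fix j assume "N - 1 \<le> j" then show "\<pi> j = []" using DecD(2)[OF D] by auto
  next
    fix j assume j: "j < N - 1"
    then show "lpath (T (nd j)) ((S'(nd (N - 1) := q)) (nd j)) (\<pi> j) ((S(nd (N - 1) := q)) (nd j))"
      using DecD(3)[OF D j] ndk by simp
  next
    show "(S'(nd (N - 1) := q)) (nd (N - 1)) = (S(nd (N - 1) := q)) (nd (N - 1))" by simp
  next
    fix j assume j: "j < N"
    show "prefix (rcvs (\<pi> j)) (src (y @ [b]) \<pi> j)"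
      using DecD(5)[OF D j] by (cases j) auto
  next
    fix j assume j: "j < N"
    show "(C(\<beta> := C \<beta> @ [b])) (ch j) = drop (length (rcvs (\<pi> j))) (src (y @ [b]) \<pi> j)"
    proof (cases j)
      case 0
      have "C \<beta> = drop (length (rcvs (\<pi> 0))) y" using DecD(6)[OF D j] 0 ch_0 by simp
      moreover have "length (rcvs (\<pi> 0)) \<le> length y" using DecD(5)[OF D j] 0 prefix_length_le by fastforce
      ultimately show ?thesis using 0 ch_0 by simp
    next
      case (Suc j')
      then show ?thesis using DecD(6)[OF D j] chb[of j] j by simp
    qed
  qed
qed

lemma Dec_recv_inner:
  assumes D: "Dec S' y \<pi> S C" and k: "k < N - 1" and t: "(S (nd k), Rcv b, q) \<in> T (nd k)"
    and c: "C (ch k) = b # w"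
  shows "Dec S' y (\<pi>(k := \<pi> k @ [Rcv b])) (S(nd k := q)) (C(ch k := w))"
proof -
  let ?\<pi> = "\<pi>(k := \<pi> k @ [Rcv b])"
  have sr: "src y ?\<pi> j = src y \<pi> j" for j by (cases j) auto
  have rk: "rcvs (?\<pi> k) = rcvs (\<pi> k) @ [b]" by simp
  have ro: "j \<noteq> k \<Longrightarrow> rcvs (?\<pi> j) = rcvs (\<pi> j)" for j by simp
  have ndk: "j < N \<Longrightarrow> j \<noteq> k \<Longrightarrow> nd j \<noteq> nd k" for j using nd_ne k by simp
  have kN: "k < N" using k by simp
  obtain z where z: "src y \<pi> k = rcvs (\<pi> k) @ z" using DecD(5)[OF D kN] by (auto simp: prefix_def)
  have "z = b # w" using DecD(6)[OF D kN] c z by simp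
  then have sk: "src y \<pi> k = rcvs (\<pi> k) @ b # w" using z by simp
  show ?thesis
  proof (rule DecI)
    show "reach (S', base y)" by (rule DecD(1)[OF D])
  next
    fix j assume "N - 1 \<le> j" then show "?\<pi> j = []" using DecD(2)[OF D] k by auto
  next
    fix j assume j: "j < N - 1"
    show "lpath (T (nd j)) (S' (nd j)) (?\<pi> j) ((S(nd k := q)) (nd j))"
    proof (cases "j = k")
      case True then show ?thesis using DecD(3)[OF D j] t by (auto intro: lpath_snoc)
    next
      case False then show ?thesis using DecD(3)[OF D j] j ndk by auto
    qed
  next
    show "S' (nd (N - 1)) = (S(nd k := q)) (nd (N - 1))" using DecD(4)[OF D] ndk[of "N - 1"] k by auto
  next
    fix j assume j: "j < N"
    show "prefix (rcvs (?\<pi> j)) (src y ?\<pi> j)"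
    proof (cases "j = k")
      case True then show ?thesis using sk sr by simp
    next
      case False then show ?thesis using DecD(5)[OF D j] sr ro by simp
    qed
  next
    fix j assume j: "j < N"
    show "(C(ch k := w)) (ch j) = drop (length (rcvs (?\<pi> j))) (src y ?\<pi> j)"
    proof (cases "j = k")
      case True then show ?thesis using sk sr by simp
    next
      case False
      then have "ch j \<noteq> ch k" using ch_ne j kN by simp
      then show ?thesis using DecD(6)[OF D j] sr ro False by simp
    qed
  qed
qed

lemma Dec_recv_last1:
  assumes D: "Dec S' y \<pi> S C" and N1: "N = 1" and t: "(S (nd 0), Rcv b, q) \<in> T (nd 0)"
    and c: "C \<beta> = b # w"
  shows "Dec (S(nd 0 := q)) w \<pi> (S(nd 0 := q)) (C(\<beta> := w))"
proof -
  have allnd: "j = nd 0" for j using nd_surj[of j] N1 by auto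
  have allch: "\<xi> = \<beta>" for \<xi> using ch_cases[of \<xi>] N1 ch_0 by (metis less_one)
  have "S' = S"
  proof
    fix x
    have "x = nd 0" by (rule allnd)
    then show "S' x = S x" using DecD(4)[OF D] N1 by simp
  qed
  have p0: "\<pi> 0 = []" using DecD(2)[OF D, of 0] N1 by simp
  have "C \<beta> = y" using DecD(6)[OF D, of 0] N1 p0 ch_0 by simp
  have Cb: "C = base y"
  proof
    fix x
    have "x = \<beta>" by (rule allch)
    then show "C x = base y x" using \<open>C \<beta> = y\<close> by (simp add: base_def)
  qed
  have bM: "b \<in> M \<beta>" using T_rcv[OF t] in_edge[of 0] ch_0 by simp
  have hb: "head \<beta> = nd 0" using head_ch[of 0] ch_0 by simp
  show ?thesis
  proof (rule DecI)
    have st: "step (S, base y) (S(nd 0 := q), (base y)(\<beta> := w))"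
      using t bM hb c Cb by (intro cfsm_step.recv) auto
    have "(base y)(\<beta> := w) = base w" by (simp add: base_def)
    then show "reach (S(nd 0 := q), base w)" using reach_step[OF _ st] DecD(1)[OF D] \<open>S' = S\<close> by simp
  next
    fix j assume "N - 1 \<le> j" then show "\<pi> j = []" using DecD(2)[OF D] by auto
  next
    fix j assume "j < N - 1" then show "lpath (T (nd j)) ((S(nd 0 := q)) (nd j)) (\<pi> j) ((S(nd 0 := q)) (nd j))"
      using N1 by simp
  next
    show "(S(nd 0 := q)) (nd (N - 1)) = (S(nd 0 := q)) (nd (N - 1))" by simp
  next
    fix j assume "j < N" then have "j = 0" using N1 by simp
    then show "prefix (rcvs (\<pi> j)) (src w \<pi> j)" using p0 by simp
  next
    fix j assume "j < N" then have "j = 0" using N1 by simp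
    then show "(C(\<beta> := w)) (ch j) = drop (length (rcvs (\<pi> j))) (src w \<pi> j)" using p0 ch_0 by simp
  qed
qed

end

context cyc
begin

lemma Dec_recv_last2:
  assumes D: "Dec S' y \<pi> S C" and N2: "2 \<le> N" and t: "(S (nd (N - 1)), Rcv b, q) \<in> T (nd (N - 1))"
    and c: "C (ch (N - 1)) = b # w"
  shows "\<exists>S'' y'' \<pi>''. Dec S'' y'' \<pi>'' (S(nd (N - 1) := q)) (C(ch (N - 1) := w))"
proof -
  define l where "l = N - 2"
  have Nl: "N - 1 = Suc l" "N = Suc (Suc l)" using N2 l_def by auto
  have pl: "\<pi> (Suc l) = []" using DecD(2)[OF D] Nl by simp
  have snl: "snds (\<pi> l) = b # w" using DecD(6)[OF D, of "Suc l"] c Nl pl by simp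
  define \<alpha> where "\<alpha> j = (if j \<le> l then Aseq l \<pi> b (l - j) else [])" for j
  have A: "d \<le> l \<Longrightarrow> prefix (Aseq l \<pi> b d) (\<pi> (l - d)) \<and>
      snds (Aseq l \<pi> b d) = (if d = 0 then [b] else rcvs (Aseq l \<pi> b (d - 1)))" for d
  proof (induction d)
    case 0
    have "prefix [b] (snds (\<pi> l))" using snl by simp
    from pfx_prop[OF this] show ?case by simp
  next
    case (Suc d)
    then have d: "d < l" by simp
    have IH: "prefix (Aseq l \<pi> b d) (\<pi> (l - d))" using Suc.IH d by simp
    have e: "l - d = Suc (l - Suc d)" using d by simp
    have "prefix (rcvs (\<pi> (l - d))) (src y \<pi> (l - d))" using DecD(5)[OF D, of "l - d"] Nl by simp
    then have "prefix (rcvs (\<pi> (l - d))) (snds (\<pi> (l - Suc d)))" using e by simp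
    moreover have "prefix (rcvs (Aseq l \<pi> b d)) (rcvs (\<pi> (l - d)))" using IH by (rule hom_prefix)
    ultimately have "prefix (rcvs (Aseq l \<pi> b d)) (snds (\<pi> (l - Suc d)))" by (rule prefix_order.trans[rotated])
    from pfx_prop[OF this] show ?case by simp
  qed
  have \<alpha>1: "prefix (\<alpha> j) (\<pi> j)" for j
  proof (cases "j \<le> l")
    case True then show ?thesis using A[of "l - j"] by (simp add: \<alpha>_def)
  qed (simp add: \<alpha>_def)
  have \<alpha>2: "snds (\<alpha> l) = [b]" using A[of 0] by (simp add: \<alpha>_def)
  have \<alpha>3: "j < l \<Longrightarrow> snds (\<alpha> j) = rcvs (\<alpha> (Suc j))" for j
  proof -
    assume j: "j < l"
    have "snds (Aseq l \<pi> b (l - j)) = rcvs (Aseq l \<pi> b (l - j - 1))" using A[of "l - j"] j by simp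
    moreover have "l - j - 1 = l - Suc j" by simp
    ultimately show ?thesis using j by (simp add: \<alpha>_def)
  qed
  have \<alpha>0: "l < j \<Longrightarrow> \<alpha> j = []" for j by (simp add: \<alpha>_def)
  define \<gamma> where "\<gamma> j = drop (length (\<alpha> j)) (\<pi> j)" for j
  have split: "\<pi> j = \<alpha> j @ \<gamma> j" for j using \<alpha>1[of j] by (auto simp: prefix_def \<gamma>_def)
  have rsplit: "rcvs (\<pi> j) = rcvs (\<alpha> j) @ rcvs (\<gamma> j)" "snds (\<pi> j) = snds (\<alpha> j) @ snds (\<gamma> j)" for j
    using split[of j] by (metis hom_append)+
  have "\<forall>j. \<exists>r. j < N - 1 \<longrightarrow> lpath (T (nd j)) (S' (nd j)) (\<alpha> j) r \<and> lpath (T (nd j)) r (\<gamma> j) (S (nd j))"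
  proof
    fix j
    show "\<exists>r. j < N - 1 \<longrightarrow> lpath (T (nd j)) (S' (nd j)) (\<alpha> j) r \<and> lpath (T (nd j)) r (\<gamma> j) (S (nd j))"
    proof (cases "j < N - 1")
      case True
      then have "lpath (T (nd j)) (S' (nd j)) (\<alpha> j @ \<gamma> j) (S (nd j))" using DecD(3)[OF D True] split[of j] by simp
      then show ?thesis unfolding lpath_append by blast
    qed simp
  qed
  then obtain r where r: "\<And>j. j < N - 1 \<Longrightarrow> lpath (T (nd j)) (S' (nd j)) (\<alpha> j) (r j) \<and> lpath (T (nd j)) (r j) (\<gamma> j) (S (nd j))"
    by metis
  define Smid where "Smid = (\<lambda>i. if idx i < N - 1 then r (idx i) else S i)"
  define Cmid where "Cmid = (\<lambda>\<xi>. drop (length (rcvs (\<alpha> (eidx \<xi>)))) (src y \<alpha> (eidx \<xi>)))"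
  have Dmid: "Dec S' y \<alpha> Smid Cmid"
  proof (rule DecI)
    show "reach (S', base y)" by (rule DecD(1)[OF D])
  next
    fix j assume "N - 1 \<le> j" then show "\<alpha> j = []" using Nl \<alpha>0 by simp
  next
    fix j assume j: "j < N - 1"
    then show "lpath (T (nd j)) (S' (nd j)) (\<alpha> j) (Smid (nd j))" using r[OF j] by (simp add: Smid_def)
  next
    show "S' (nd (N - 1)) = Smid (nd (N - 1))" using DecD(4)[OF D] N_pos by (simp add: Smid_def)
  next
    fix j assume j: "j < N"
    show "prefix (rcvs (\<alpha> j)) (src y \<alpha> j)"
    proof (cases j)
      case 0
      have "prefix (rcvs (\<alpha> 0)) (rcvs (\<pi> 0))" using \<alpha>1[of 0] by (rule hom_prefix)
      moreover have "prefix (rcvs (\<pi> 0)) y" using DecD(5)[OF D j] 0 by simp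
      ultimately show ?thesis using 0 by (simp add: prefix_order.trans)
    next
      case (Suc j')
      show ?thesis
      proof (cases "j' < l")
        case True then show ?thesis using Suc \<alpha>3[of j'] by simp
      next
        case False then have "l < j" using Suc by simp
        then show ?thesis using \<alpha>0 by simp
      qed
    qed
  next
    fix j assume "j < N" then show "Cmid (ch j) = drop (length (rcvs (\<alpha> j))) (src y \<alpha> j)"
      by (simp add: Cmid_def)
  qed
  have reach_mid: "reach (Smid, Cmid)" by (rule Dec_reach[OF Dmid])
  have NlN: "N - 1 < N" using Nl by simp
  have Cmid_last: "Cmid (ch (N - 1)) = [b]" using NlN Nl \<alpha>0[of "Suc l"] \<alpha>2 by (simp add: Cmid_def)
  define y'' where "y'' = drop (length (rcvs (\<alpha> 0))) y"
  have ch0ne: "ch (N - 1) \<noteq> \<beta>" using ch_ne[of "N - 1" 0] Nl ch_0 by simp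
  have Cmid_base: "Cmid(ch (N - 1) := []) = base y''"
  proof
    fix \<xi>
    obtain i where i: "i < N" "\<xi> = ch i" by (rule ch_cases)
    show "(Cmid(ch (N - 1) := [])) \<xi> = base y'' \<xi>"
    proof (cases "i = N - 1")
      case True then show ?thesis using i ch0ne by (simp add: base_def)
    next
      case False
      show ?thesis
      proof (cases i)
        case 0
        then show ?thesis using i ch0ne ch_0 beta_idx by (simp add: base_def Cmid_def y''_def)
      next
        case (Suc i')
        then have i': "i' < l" using False i Nl by simp
        have "ch i \<noteq> \<beta>" using ch_ne[of i 0] i Suc ch_0 by simp
        moreover have "ch i \<noteq> ch (N - 1)" using ch_ne[of i "N - 1"] i False NlN by simp
        ultimately show ?thesis using i Suc \<alpha>3[OF i'] by (simp add: base_def Cmid_def)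
      qed
    qed
  qed
  have Smid_last: "Smid (nd (N - 1)) = S (nd (N - 1))" using NlN by (simp add: Smid_def)
  have bM: "b \<in> M (ch (N - 1))" using T_rcv[OF t] in_edge by simp
  have st: "step (Smid, Cmid) (Smid(nd (N - 1) := q), Cmid(ch (N - 1) := []))"
    using t bM Cmid_last Smid_last by (intro cfsm_step.recv) auto
  define S'' where "S'' = Smid(nd (N - 1) := q)"
  define \<pi>'' where "\<pi>'' j = (if j < N - 1 then \<gamma> j else [])" for j
  have reach'': "reach (S'', base y'')" using reach_step[OF reach_mid st] Cmid_base by (simp add: S''_def)
  have ndne: "j < N - 1 \<Longrightarrow> nd j \<noteq> nd (N - 1)" for j using nd_ne NlN by simp
  have "Dec S'' y'' \<pi>'' (S(nd (N - 1) := q)) (C(ch (N - 1) := w))"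
  proof (rule DecI)
    show "reach (S'', base y'')" by (rule reach'')
  next
    fix j assume "N - 1 \<le> j" then show "\<pi>'' j = []" by (simp add: \<pi>''_def)
  next
    fix j assume j: "j < N - 1"
    then show "lpath (T (nd j)) (S'' (nd j)) (\<pi>'' j) ((S(nd (N - 1) := q)) (nd j))"
      using r[OF j] ndne[OF j] j by (simp add: S''_def Smid_def \<pi>''_def)
  next
    show "S'' (nd (N - 1)) = (S(nd (N - 1) := q)) (nd (N - 1))" by (simp add: S''_def)
  next
    fix j assume j: "j < N"
    show "prefix (rcvs (\<pi>'' j)) (src y'' \<pi>'' j)"
    proof (cases "j = N - 1")
      case True then show ?thesis by (simp add: \<pi>''_def)
    next
      case False
      then have jl: "j < N - 1" using j by simp
      show ?thesis
      proof (cases j)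
        case 0
        obtain z where "y = rcvs (\<pi> 0) @ z" using DecD(5)[OF D, of 0] N_pos by (auto simp: prefix_def)
        then have "y'' = rcvs (\<gamma> 0) @ z" using rsplit(1)[of 0] by (simp add: y''_def)
        then show ?thesis using 0 jl by (simp add: \<pi>''_def)
      next
        case (Suc j')
        then have j': "j' < l" using jl Nl by simp
        have "prefix (rcvs (\<pi> j)) (snds (\<pi> j'))" using DecD(5)[OF D j] Suc by simp
        then have "prefix (rcvs (\<alpha> j) @ rcvs (\<gamma> j)) (rcvs (\<alpha> j) @ snds (\<gamma> j'))"
          using rsplit[of j] rsplit[of j'] \<alpha>3[OF j'] Suc by simp
        then have "prefix (rcvs (\<gamma> j)) (snds (\<gamma> j'))" by simp
        then show ?thesis using Suc jl j' Nl by (simp add: \<pi>''_def)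
      qed
    qed
  next
    fix j assume j: "j < N"
    show "(C(ch (N - 1) := w)) (ch j) = drop (length (rcvs (\<pi>'' j))) (src y'' \<pi>'' j)"
    proof (cases "j = N - 1")
      case True
      have "snds (\<gamma> l) = w" using rsplit(2)[of l] snl \<alpha>2 by simp
      then show ?thesis using True Nl by (simp add: \<pi>''_def)
    next
      case False
      then have jl: "j < N - 1" using j by simp
      have chne: "ch j \<noteq> ch (N - 1)" using ch_ne[of j "N - 1"] j NlN False by simp
      show ?thesis
      proof (cases j)
        case 0
        have "C (ch 0) = drop (length (rcvs (\<pi> 0))) y" using DecD(6)[OF D, of 0] N_pos by simp
        then show ?thesis using 0 jl chne rsplit(1)[of 0] by (simp add: \<pi>''_def y''_def add.commute)
      next
        case (Suc j')
        then have j': "j' < l" using jl Nl by simp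
        have "C (ch j) = drop (length (rcvs (\<pi> j))) (snds (\<pi> j'))" using DecD(6)[OF D j] Suc by simp
        also have "\<dots> = drop (length (rcvs (\<alpha> j)) + length (rcvs (\<gamma> j))) (rcvs (\<alpha> j) @ snds (\<gamma> j'))"
          using rsplit[of j] rsplit[of j'] \<alpha>3[OF j'] Suc by simp
        also have "\<dots> = drop (length (rcvs (\<gamma> j))) (snds (\<gamma> j'))" by simp
        finally show ?thesis using Suc jl chne by (simp add: \<pi>''_def)
      qed
    qed
  qed
  then show ?thesis by blast
qed

lemma Dec_step:
  "step X Y \<Longrightarrow> Dec S' y \<pi> (fst X) (snd X) \<Longrightarrow> \<exists>S'' y'' \<pi>''. Dec S'' y'' \<pi>'' (fst Y) (snd Y)"
proof (induction arbitrary: S' y \<pi> rule: cfsm_step.induct)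
  case (send S i b q \<beta>' C)
  have D: "Dec S' y \<pi> S C" using send.prems by simp
  define k where "k = idx i"
  have k: "k < N" "nd k = i" using idx unfolding k_def by auto
  have b': "\<beta>' = ch (Suc k)" using send.hyps(3) out_edge[of k] k tail_eq by metis
  show ?case
  proof (cases "k < N - 1")
    case True
    have "Dec S' y (\<pi>(k := \<pi> k @ [Snd b])) (S(nd k := q)) (C(ch (Suc k) := C (ch (Suc k)) @ [b]))"
      using Dec_send_inner[OF D True] send.hyps(1) k by simp
    then show ?thesis unfolding fst_conv snd_conv k(2)[symmetric] b' by blast
  next
    case False
    then have kN: "k = N - 1" using k by simp
    then have "\<beta>' = \<beta>" using b' ch_N N_pos by simp
    have "Dec (S'(nd (N - 1) := q)) (y @ [b]) \<pi> (S(nd (N - 1) := q)) (C(\<beta> := C \<beta> @ [b]))"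
      using Dec_send_last[OF D] send.hyps(1) k kN by simp
    then show ?thesis unfolding fst_conv snd_conv k(2)[symmetric] kN \<open>\<beta>' = \<beta>\<close> by blast
  qed
next
  case (recv S i b q \<beta>' C w)
  have D: "Dec S' y \<pi> S C" using recv.prems by simp
  define k where "k = idx i"
  have k: "k < N" "nd k = i" using idx unfolding k_def by auto
  have b': "\<beta>' = ch k" using recv.hyps(3) in_edge[of k] k head_eq by metis
  show ?case
  proof (cases "k < N - 1")
    case True
    have "Dec S' y (\<pi>(k := \<pi> k @ [Rcv b])) (S(nd k := q)) (C(ch k := w))"
      using Dec_recv_inner[OF D True] recv.hyps(1) recv.hyps(4) k b' by simp
    then show ?thesis unfolding fst_conv snd_conv k(2)[symmetric] b' by blast
  next
    case False
    then have kN: "k = N - 1" using k by simp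
    show ?thesis
    proof (cases "N = 1")
      case True
      then have "k = 0" "\<beta>' = \<beta>" using kN b' ch_0 by auto
      have "Dec (S(nd 0 := q)) w \<pi> (S(nd 0 := q)) (C(\<beta> := w))"
        using Dec_recv_last1[OF D True] recv.hyps(1) recv.hyps(4) k \<open>k = 0\<close> \<open>\<beta>' = \<beta>\<close> by simp
      then show ?thesis unfolding fst_conv snd_conv k(2)[symmetric] \<open>k = 0\<close> \<open>\<beta>' = \<beta>\<close> by blast
    next
      case False
      then have N2: "2 \<le> N" using N_pos by simp
      have "\<exists>S'' y'' \<pi>''. Dec S'' y'' \<pi>'' (S(nd (N - 1) := q)) (C(ch (N - 1) := w))"
        using Dec_recv_last2[OF D N2] recv.hyps(1) recv.hyps(4) k kN b' by simp
      then show ?thesis unfolding fst_conv snd_conv k(2)[symmetric] b' kN by blast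
    qed
  qed
qed

lemma reach_Dec: "reach X \<Longrightarrow> \<exists>S' y \<pi>. Dec S' y \<pi> (fst X) (snd X)"
proof -
  assume "reach X"
  then have "step\<^sup>*\<^sup>* (h, \<lambda>\<xi>. []) X" by (simp add: reach_def)
  then show ?thesis
  proof (induction rule: rtranclp_induct)
    case base then show ?case using Dec_init by auto
  next
    case (step Y Z)
    then obtain S' y \<pi> where "Dec S' y \<pi> (fst Y) (snd Y)" by blast
    then show ?case using Dec_step[OF step.hyps(2)] by blast
  qed
qed

end

context cyc
begin

lemma reach_L_eq: "reach_L tail head M T h S = {C. reach (S, C)}"
  by (simp add: reach_L_def reach_def)

lemma Rk_recog:
  assumes Q: "\<forall>S. composite_state K S \<longrightarrow> regular (Q_set tail head M T h \<beta> S)"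
    and S': "\<forall>j. S' j \<in> K j"
  shows "k \<le> N - 1 \<Longrightarrow> recognizable M (Rk S' S k)"
proof (induction k)
  case 0
  define Q0 where "Q0 = Q_set tail head M T h \<beta> S'"
  define L0 where "L0 = (\<lambda>\<xi>. {[]})(\<beta> := Q0)"
  have Q0reg: "regular Q0" using Q S' by (simp add: Q0_def composite_state_def)
  have Q0sub: "Q0 \<subseteq> lists (M \<beta>)"
  proof
    fix x assume "x \<in> Q0"
    then obtain C0 where "reach (S', C0)" "x = C0 \<beta>" by (auto simp: Q0_def Q_set_def reach_L_eq)
    then show "x \<in> lists (M \<beta>)" using reach_inv chan_get by blast
  qed
  have eq: "Rk S' S 0 = blk L0"
  proof (intro equalityI subsetI)
    fix C assume "C \<in> Rk S' S 0"
    then obtain y where y: "C = base y" "reach (S', base y)" by auto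
    have "y \<in> Q0" unfolding Q0_def Q_set_def reach_L_eq
      using y by (intro CollectI exI[of _ "base y"]) (auto simp: base_def)
    then show "C \<in> blk L0" using y by (auto simp: blk_def L0_def base_def)
  next
    fix C assume "C \<in> blk L0"
    then have Call: "C \<zeta> \<in> L0 \<zeta>" for \<zeta> by (simp add: blk_def)
    have Cb: "C \<beta> \<in> Q0" using Call[of \<beta>] by (simp add: L0_def)
    have Co: "\<forall>\<xi>. \<xi> \<noteq> \<beta> \<longrightarrow> C \<xi> = []"
    proof (intro allI impI)
      fix \<xi> assume "\<xi> \<noteq> \<beta>" then show "C \<xi> = []" using Call[of \<xi>] by (simp add: L0_def)
    qed
    from Cb obtain C0 where C0: "reach (S', C0)" "C \<beta> = C0 \<beta>" "\<forall>\<xi>. \<xi> \<noteq> \<beta> \<longrightarrow> C0 \<xi> = []"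
      by (auto simp: Q0_def Q_set_def reach_L_eq)
    have "C0 = base (C \<beta>)" using C0 by (auto simp: base_def fun_eq_iff)
    moreover have "C = base (C \<beta>)" using Co by (auto simp: base_def fun_eq_iff)
    ultimately show "C \<in> Rk S' S 0" using C0(1) by auto
  qed
  have "\<forall>L\<in>{L0}. \<forall>\<xi>. L \<xi> \<subseteq> lists (M \<xi>) \<and> regular (L \<xi>)"
    using Q0reg Q0sub by (auto simp: L0_def intro: reg_finite)
  then show ?case unfolding recognizable_blk eq by (intro exI[of _ "{L0}"]) auto
next
  case (Suc k)
  then have k: "k < N - 1" "Suc k < N" "k < N" by auto
  have IH: "recognizable M (Rk S' S k)" using Suc by simp
  have ne: "ch k \<noteq> ch (Suc k)" using ch_ne k by simp
  have P: "regular (PL S' S k)" unfolding PL_def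
    by (rule lpath_regular[OF K_finite Lab_finite T_sub]) (use S' in blast)
  have Ps: "\<forall>w\<in>PL S' S k. snds w \<in> lists (M (ch (Suc k)))"
    using lpath_snds out_edge unfolding PL_def by fastforce
  show ?case unfolding Rk.simps by (rule transfer_recog[OF IH ne P Ps])
qed

lemma main_recog:
  assumes Q: "\<forall>S. composite_state K S \<longrightarrow> regular (Q_set tail head M T h \<beta> S)"
  shows "recognizable_channel_property tail head M K T h"
  unfolding recognizable_channel_property_def
proof (intro allI impI)
  fix S assume "composite_state K S"
  define SS where "SS = {S'. (\<forall>j. S' j \<in> K j) \<and> S' (nd (N - 1)) = S (nd (N - 1))}"
  have eq: "reach_L tail head M T h S = \<Union>((\<lambda>S'. Rk S' S (N - 1)) ` SS)"
  proof (intro equalityI subsetI)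
    fix C assume "C \<in> reach_L tail head M T h S"
    then have "reach (S, C)" by (simp add: reach_L_eq)
    then obtain S' y \<pi> where D: "Dec S' y \<pi> S C" using reach_Dec by fastforce
    have "S' \<in> SS" using reach_inv[OF DecD(1)[OF D]] DecD(4)[OF D] by (simp add: SS_def)
    moreover have "C \<in> Rk S' S (N - 1)" by (rule Dec_Rk[OF D])
    ultimately show "C \<in> \<Union>((\<lambda>S'. Rk S' S (N - 1)) ` SS)" by blast
  next
    fix C assume "C \<in> \<Union>((\<lambda>S'. Rk S' S (N - 1)) ` SS)"
    then obtain S' where "S' \<in> SS" "C \<in> Rk S' S (N - 1)" by blast
    then have "reach (S, C)" using Rk_reach_full by (simp add: SS_def)
    then show "C \<in> reach_L tail head M T h S" by (simp add: reach_L_eq)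
  qed
  have "SS \<subseteq> Pi\<^sub>E UNIV K" by (auto simp: SS_def PiE_UNIV_domain)
  moreover have "finite (Pi\<^sub>E UNIV K)" by (rule finite_PiE) (auto simp: K_finite)
  ultimately have "finite SS" by (rule finite_subset)
  then have "finite ((\<lambda>S'. Rk S' S (N - 1)) ` SS)" by simp
  moreover have "\<forall>A\<in>(\<lambda>S'. Rk S' S (N - 1)) ` SS. recognizable M A"
    using Rk_recog[OF Q] by (auto simp: SS_def)
  ultimately show "recognizable M (reach_L tail head M T h S)"
    unfolding eq by (rule recognizable_Union)
qed

end

theorem theorem8p3:
  fixes tail head :: "'e::finite \<Rightarrow> 'n::finite"
    and M :: "'e \<Rightarrow> 'm set"
    and K :: "'n \<Rightarrow> 's set"
    and T :: "'n \<Rightarrow> ('s \<times> 'm act \<times> 's) set"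
    and h :: "'n \<Rightarrow> 's"
  assumes "cfsm_protocol tail head M K T h"
    and "cyclic_graph tail head"
  shows "(recognizable_channel_property tail head M K T h
            \<longleftrightarrow> rational_channel_property tail head M K T h)
       \<and> (rational_channel_property tail head M K T h
            \<longleftrightarrow> (\<forall>\<beta> S. composite_state K S \<longrightarrow> regular (Q_set tail head M T h \<beta> S)))
       \<and> ((\<forall>\<beta> S. composite_state K S \<longrightarrow> regular (Q_set tail head M T h \<beta> S))
            \<longleftrightarrow> (\<exists>\<beta>. \<forall>S. composite_state K S \<longrightarrow> regular (Q_set tail head M T h \<beta> S)))"
proof -
  let ?a = "recognizable_channel_property tail head M K T h"
  let ?b = "rational_channel_property tail head M K T h"
  let ?c = "\<forall>\<beta> S. composite_state K S \<longrightarrow> regular (Q_set tail head M T h \<beta> S)"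
  let ?d = "\<exists>\<beta>. \<forall>S. composite_state K S \<longrightarrow> regular (Q_set tail head M T h \<beta> S)"
  have ab: "?a \<Longrightarrow> ?b"
    unfolding recognizable_channel_property_def rational_channel_property_def
    using recognizable_rational by blast
  have bc: "?b \<Longrightarrow> ?c"
  proof (intro allI impI)
    fix \<beta> S assume "?b" "composite_state K S"
    then have "rational M (reach_L tail head M T h S)" by (simp add: rational_channel_property_def)
    then have "regular (Zp \<beta> (reach_L tail head M T h S))" by (rule rational_Zp)
    moreover have "Zp \<beta> (reach_L tail head M T h S) = Q_set tail head M T h \<beta> S"
      by (simp add: Zp_def Q_set_def)
    ultimately show "regular (Q_set tail head M T h \<beta> S)" by simp
  qed
  have cd: "?c \<Longrightarrow> ?d" by blast
  have da: "?d \<Longrightarrow> ?a"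
  proof -
    assume ?d
    then obtain \<beta> where Q: "\<forall>S. composite_state K S \<longrightarrow> regular (Q_set tail head M T h \<beta> S)" by blast
    interpret c: cyc tail head M K T h \<beta> using assms by unfold_locales
    show ?a by (rule c.main_recog[OF Q])
  qed
  show ?thesis using ab bc cd da by blast
qed

end
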